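(* Let $\mathcal{F}$ be a clique tree forest in which every clique tree is valid and calibrated. Let $\mathcal{F}'$ be obtained from $\mathcal{F}$ by a finite sequence of the operations (O1)–(O4) described in the context, each applied to the current forest. Then every clique tree of $\mathcal{F}'$ is calibrated.
   Context: All variables are discrete with finite domains; $D_v$ denotes the domain of variable $v$. A clique tree (CT) is a tree whose nodes are cliques (sets of variables) $C_i$, each carrying a nonnegative clique belief $\beta(C_i)$ (a function of the states of the variables in $C_i$). Each edge $(C_i,C_j)$ carries a sepset $S_{i,j}=C_i\cap C_j$ and a nonnegative sepset belief $\mu(S_{i,j})$. A clique tree forest (CTF) is a disjoint collection of clique trees. A CT is valid if every sepset is nonempty and equals the intersection of its two endpoint cliques, and the running intersection property holds: for every variable $v$, the cliques containing $v$ form a connected subtree. A CT is calibrated if for every edge $(C_i,C_j)$ we have $\sum_{C_i\setminus S_{i,j}}\beta(C_i)=\mu(S_{i,j})=\sum_{C_j\setminus S_{i,j}}\beta(C_j)$. The normalization constant of a calibrated CT is $Z=\sum_{C}\beta(C)$, the sum of any one clique belief over all joint states of that clique's variables (for a calibrated tree this does not depend on the clique chosen). A clique $C$ is non-maximal if $C\subseteq C'$ for some neighbouring clique $C'$. The operations are: (O1) Restriction: replace a CT by a connected subtree of it (keeping the beliefs of the retained cliques and sepsets), or delete a CT entirely. (O2) Exact marginalization of a variable $v$: let $ST_v$ be the (connected) subtree of all cliques containing $v$. Replace $ST_v$ by a single clique $C_c=\big(\bigcup_{C\in ST_v}C\big)\setminus\{v\}$ with belief $\beta(C_c)=\sum_{D_v}\frac{\prod_{C\in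 ST_v}\beta(C)}{\prod_{S\in ST_v}\mu(S)}$, where the denominator ranges over the sepsets of edges inside $ST_v$. Every edge joining a clique of $ST_v$ to a clique $N$ outside $ST_v$ is replaced by an edge between $C_c$ and $N$, with the same sepset and sepset belief. (When $ST_v$ is a single clique this is just summing $v$ out of its belief.) (O3) Local marginalization of a variable $v$: choose a nonempty connected subtree $ST_r$ of the cliques containing $v$. Remove $v$ from every clique containing $v$ that is not in $ST_r$, and from every sepset that contains $v$ and is not an edge inside $ST_r$. Each modified clique $C'=C\setminus\{v\}$ gets belief $\beta(C')=\sum_{D_v}\beta(C)$. Each modified sepset $S'=S\setminus\{v\}$ gets belief $\mu(S')=\sum_{D_v}\mu(S)$. The operation is only allowed if no sepset becomes empty, so that the tree stays connected. (O4) Removal of a non-maximal clique: if $C\subseteq C'$ for a neighbour $C'$, delete $C$ and the edge $(C,C')$. Connect each other neighbour $N$ of $C$ to $C'$, with sepset $N\cap C'$ and sepset belief equal to the former belief $\mu(N\cap C)$. *)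

theory Defs
  imports Complex_Main "HOL-Library.FuncSet"
begin

text \<open>A clique tree forest is represented as one finite undirected graph whose
connected components are the clique trees.  Variables have type 'v, states type 's; the domain of
variable v is D v.  A joint state of a set of variables A is an element of
PiE A D (value undefined outside A).\<close>

record ('n, 'v, 's) ctf =
  nodes :: "'n set"
  edges :: "'n set set"
  clq   :: "'n \<Rightarrow> 'v set"
  bel   :: "'n \<Rightarrow> ('v \<Rightarrow> 's) \<Rightarrow> real"
  sep   :: "'n set \<Rightarrow> 'v set"
  sbel  :: "'n set \<Rightarrow> ('v \<Rightarrow> 's) \<Rightarrow> real"

definition merge :: "'v set \<Rightarrow> ('v \<Rightarrow> 's) \<Rightarrow> ('v \<Rightarrow> 's) \<Rightarrow> ('v \<Rightarrow> 's)" where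
  "merge S a b = (\<lambda>x. if x \<in> S then a x else b x)"

definition marg :: "('v \<Rightarrow> 's set) \<Rightarrow> 'v set \<Rightarrow> 'v set \<Rightarrow> (('v \<Rightarrow> 's) \<Rightarrow> real)
    \<Rightarrow> ('v \<Rightarrow> 's) \<Rightarrow> real" where
  "marg D C S f a = (\<Sum>b \<in> PiE (C - S) D. f (merge S a b))"

definition adj :: "'n set set \<Rightarrow> ('n \<times> 'n) set" where
  "adj E = {(i, j). {i, j} \<in> E}"

definition connected_in :: "'n set set \<Rightarrow> 'n set \<Rightarrow> bool" where
  "connected_in E K \<longleftrightarrow> K \<noteq> {} \<and>
     (\<forall>i\<in>K. \<forall>j\<in>K. (i, j) \<in> (adj {e \<in> E. e \<subseteq> K})\<^sup>*)"

definition trees :: "('n, 'v, 's) ctf \<Rightarrow> 'n set set" where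
  "trees F = (\<lambda>i. {j. (i, j) \<in> (adj (edges F))\<^sup>*}) ` nodes F"

definition ctf_wf :: "('v \<Rightarrow> 's set) \<Rightarrow> ('n, 'v, 's) ctf \<Rightarrow> bool" where
  "ctf_wf D F \<longleftrightarrow> finite (nodes F)
     \<and> (\<forall>e \<in> edges F. card e = 2 \<and> e \<subseteq> nodes F)
     \<and> (\<forall>K \<in> trees F. card {e \<in> edges F. e \<subseteq> K} = card K - 1)
     \<and> (\<forall>i \<in> nodes F. finite (clq F i))
     \<and> (\<forall>i \<in> nodes F. \<forall>a \<in> PiE (clq F i) D. bel F i a \<ge> 0)
     \<and> (\<forall>e \<in> edges F. \<forall>a \<in> PiE (sep F e) D. sbel F e a \<ge> 0)"

definition valid_tree :: "('n, 'v, 's) ctf \<Rightarrow> 'n set \<Rightarrow> bool" where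
  "valid_tree F K \<longleftrightarrow>
     (\<forall>i j. {i, j} \<in> edges F \<and> i \<in> K \<longrightarrow>
        sep F {i, j} \<noteq> {} \<and> sep F {i, j} = clq F i \<inter> clq F j)
     \<and> (\<forall>v. {i \<in> K. v \<in> clq F i} \<noteq> {} \<longrightarrow> connected_in (edges F) {i \<in> K. v \<in> clq F i})"

definition calibrated :: "('v \<Rightarrow> 's set) \<Rightarrow> ('n, 'v, 's) ctf \<Rightarrow> 'n set \<Rightarrow> bool" where
  "calibrated D F K \<longleftrightarrow>
     (\<forall>i j. {i, j} \<in> edges F \<and> i \<in> K \<longrightarrow>
        (\<forall>a \<in> PiE (sep F {i, j}) D.
           marg D (clq F i) (sep F {i, j}) (bel F i) a = sbel F {i, j} a
         \<and> marg D (clq F j) (sep F {i, j}) (bel F j) a = sbel F {i, j} a))"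

text \<open>(O1) Restriction of clique tree K to a connected subtree T (T = {} : deletion).\<close>
definition op_restrict :: "('n, 'v, 's) ctf \<Rightarrow> ('n, 'v, 's) ctf \<Rightarrow> bool" where
  "op_restrict F F' \<longleftrightarrow> (\<exists>K \<in> trees F. \<exists>T. T \<subseteq> K \<and> (T = {} \<or> connected_in (edges F) T) \<and>
      F' = F\<lparr> nodes := nodes F - (K - T),
              edges := {e \<in> edges F. e \<subseteq> nodes F - (K - T)} \<rparr>)"

text \<open>(O2) Exact marginalization of v in clique tree K; c is the fresh node for C_c.\<close>
definition op_exact :: "('v \<Rightarrow> 's set) \<Rightarrow> ('n, 'v, 's) ctf \<Rightarrow> ('n, 'v, 's) ctf \<Rightarrow> bool" where
  "op_exact D F F' \<longleftrightarrow> (\<exists>K \<in> trees F. \<exists>v c.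
     let ST = {i \<in> K. v \<in> clq F i};
         ES = {e \<in> edges F. e \<subseteq> ST};
         U = \<Union> (clq F ` ST);
         g = (\<lambda>x. (\<Prod>i \<in> ST. bel F i (restrict x (clq F i))) /
                  (\<Prod>e \<in> ES. sbel F e (restrict x (sep F e))))
     in connected_in (edges F) ST \<and> c \<notin> nodes F
        \<and> nodes F' = (nodes F - ST) \<union> {c}
        \<and> edges F' = {e \<in> edges F. e \<inter> ST = {}}
                      \<union> {{c, n} | i n. {i, n} \<in> edges F \<and> i \<in> ST \<and> n \<notin> ST}
        \<and> (\<forall>i \<in> nodes F - ST. clq F' i = clq F i \<and> bel F' i = bel F i)
        \<and> clq F' c = U - {v}
        \<and> bel F' c = marg D U (U - {v}) g
        \<and> (\<forall>e \<in> edges F. e \<inter> ST = {} \<longrightarrow> sep F' e = sep F e \<and> sbel F' e = sbel F e)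
        \<and> (\<forall>i n. {i, n} \<in> edges F \<and> i \<in> ST \<and> n \<notin> ST \<longrightarrow>
              sep F' {c, n} = sep F {i, n} \<and> sbel F' {c, n} = sbel F {i, n}))"

text \<open>(O3) Local marginalization of v in clique tree K, keeping v in subtree R.\<close>
definition op_local :: "('v \<Rightarrow> 's set) \<Rightarrow> ('n, 'v, 's) ctf \<Rightarrow> ('n, 'v, 's) ctf \<Rightarrow> bool" where
  "op_local D F F' \<longleftrightarrow> (\<exists>K \<in> trees F. \<exists>v R.
     let CV = {i \<in> K. v \<in> clq F i};
         ME = {e \<in> edges F. e \<subseteq> K \<and> v \<in> sep F e \<and> \<not> e \<subseteq> R}
     in R \<subseteq> CV \<and> connected_in (edges F) R
        \<and> (\<forall>e \<in> ME. sep F e - {v} \<noteq> {})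
        \<and> nodes F' = nodes F \<and> edges F' = edges F
        \<and> (\<forall>i \<in> nodes F. if i \<in> CV - R
              then clq F' i = clq F i - {v} \<and> bel F' i = marg D (clq F i) (clq F i - {v}) (bel F i)
              else clq F' i = clq F i \<and> bel F' i = bel F i)
        \<and> (\<forall>e \<in> edges F. if e \<in> ME
              then sep F' e = sep F e - {v} \<and> sbel F' e = marg D (sep F e) (sep F e - {v}) (sbel F e)
              else sep F' e = sep F e \<and> sbel F' e = sbel F e))"

text \<open>(O4) Removal of a non-maximal clique C with C \<subseteq> C' for the neighbour C'.\<close>
definition op_remove :: "('n, 'v, 's) ctf \<Rightarrow> ('n, 'v, 's) ctf \<Rightarrow> bool" where
  "op_remove F F' \<longleftrightarrow> (\<exists>C C'. {C, C'} \<in> edges F \<and> C \<noteq> C' \<and> clq F C \<subseteq> clq F C'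
        \<and> nodes F' = nodes F - {C}
        \<and> edges F' = {e \<in> edges F. C \<notin> e} \<union> {{n, C'} | n. {n, C} \<in> edges F \<and> n \<noteq> C'}
        \<and> (\<forall>i \<in> nodes F - {C}. clq F' i = clq F i \<and> bel F' i = bel F i)
        \<and> (\<forall>e \<in> edges F. C \<notin> e \<longrightarrow> sep F' e = sep F e \<and> sbel F' e = sbel F e)
        \<and> (\<forall>n. {n, C} \<in> edges F \<and> n \<noteq> C' \<longrightarrow>
              sep F' {n, C'} = clq F n \<inter> clq F C' \<and> sbel F' {n, C'} = sbel F {n, C}))"

definition ctf_step :: "('v \<Rightarrow> 's set) \<Rightarrow> ('n, 'v, 's) ctf \<Rightarrow> ('n, 'v, 's) ctf \<Rightarrow> bool" where
  "ctf_step D F F' \<longleftrightarrow> op_restrict F F' \<or> op_exact D F F' \<or> op_local D F F' \<or> op_remove F F'"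

end

theory Submission
  imports Defs
begin

lemma merge_PiE:
  assumes "a \<in> PiE S D" "b \<in> PiE T D"
  shows "merge S a b \<in> PiE (S \<union> T) D"
  using assms unfolding merge_def PiE_def extensional_def Pi_def by auto

lemma bij_merge:
  assumes "A \<inter> B = {}"
  shows "bij_betw (\<lambda>(z1,z2). merge A z1 z2) (PiE A D \<times> PiE B D) (PiE (A \<union> B) D)"
proof (rule bij_betw_byWitness[where f'="\<lambda>z. (restrict z A, restrict z B)"])
  show "\<forall>x\<in>PiE A D \<times> PiE B D. (restrict ((\<lambda>(z1,z2). merge A z1 z2) x) A, restrict ((\<lambda>(z1,z2). merge A z1 z2) x) B) = x"
  proof
    fix x assume x: "x \<in> PiE A D \<times> PiE B D"
    obtain z1 z2 where xx: "x = (z1, z2)" by fastforce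
    have "restrict (merge A z1 z2) A = z1"
      using x xx by (auto simp: merge_def PiE_def extensional_def restrict_def intro!: ext)
    moreover have "restrict (merge A z1 z2) B = z2"
      using x xx assms by (auto simp: merge_def PiE_def extensional_def restrict_def intro!: ext)
    ultimately show "(restrict ((\<lambda>(z1,z2). merge A z1 z2) x) A, restrict ((\<lambda>(z1,z2). merge A z1 z2) x) B) = x"
      using xx by simp
  qed
  show "\<forall>y\<in>PiE (A \<union> B) D. (\<lambda>(z1,z2). merge A z1 z2) (restrict y A, restrict y B) = y"
  proof
    fix y assume y: "y \<in> PiE (A \<union> B) D"
    show "(\<lambda>(z1,z2). merge A z1 z2) (restrict y A, restrict y B) = y"
      using y by (auto simp: merge_def PiE_def extensional_def restrict_def intro!: ext)
  qed
  show "(\<lambda>(z1,z2). merge A z1 z2) ` (PiE A D \<times> PiE B D) \<subseteq> PiE (A \<union> B) D"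
  proof (rule image_subsetI)
    fix x assume "x \<in> PiE A D \<times> PiE B D"
    then obtain z1 z2 where "x = (z1, z2)" "z1 \<in> PiE A D" "z2 \<in> PiE B D" by blast
    then show "(\<lambda>(z1,z2). merge A z1 z2) x \<in> PiE (A \<union> B) D"
      using merge_PiE[of z1 A D z2 B] by simp
  qed
  show "(\<lambda>z. (restrict z A, restrict z B)) ` PiE (A \<union> B) D \<subseteq> PiE A D \<times> PiE B D"
    by auto
qed

lemma sum_PiE_split:
  assumes "A \<inter> B = {}"
  shows "(\<Sum>z\<in>PiE (A \<union> B) D. h z) = (\<Sum>z1\<in>PiE A D. \<Sum>z2\<in>PiE B D. h (merge A z1 z2))"
proof -
  have "(\<Sum>z1\<in>PiE A D. \<Sum>z2\<in>PiE B D. h (merge A z1 z2)) = (\<Sum>(z1,z2)\<in>PiE A D \<times> PiE B D. h (merge A z1 z2))"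
    by (rule sum.cartesian_product)
  also have "\<dots> = (\<Sum>z\<in>PiE (A \<union> B) D. h z)"
    using sum.reindex_bij_betw[OF bij_merge[OF assms], of h D]
    by (simp add: case_prod_beta')
  finally show ?thesis by simp
qed

lemma marg_comp:
  assumes "S \<subseteq> A" "A \<subseteq> B"
  shows "marg D A S (marg D B A f) a = marg D B S f a"
proof -
  have e: "B - S = (A - S) \<union> (B - A)" "(A - S) \<inter> (B - A) = {}" using assms by auto
  have "marg D B S f a = (\<Sum>b\<in>PiE (A - S) D. \<Sum>b'\<in>PiE (B - A) D. f (merge S a (merge (A - S) b b')))"
    unfolding marg_def e(1) by (rule sum_PiE_split[OF e(2)])
  also have "\<dots> = (\<Sum>b\<in>PiE (A - S) D. \<Sum>b'\<in>PiE (B - A) D. f (merge A (merge S a b) b'))"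
  proof (intro sum.cong refl)
    fix b b'
    have "merge S a (merge (A - S) b b') = merge A (merge S a b) b'"
      using assms by (auto simp: merge_def intro!: ext)
    then show "f (merge S a (merge (A - S) b b')) = f (merge A (merge S a b) b')" by simp
  qed
  finally show ?thesis unfolding marg_def by simp
qed

lemma marg_cong:
  assumes "a \<in> PiE S D" "S \<subseteq> A" "\<And>x. x \<in> PiE A D \<Longrightarrow> h x = h' x"
  shows "marg D A S h a = marg D A S h' a"
  unfolding marg_def
proof (rule sum.cong[OF refl])
  fix b assume "b \<in> PiE (A - S) D"
  then have "merge S a b \<in> PiE (S \<union> (A - S)) D" using merge_PiE assms(1) by blast
  moreover have "S \<union> (A - S) = A" using assms(2) by auto
  ultimately show "h (merge S a b) = h' (merge S a b)" using assms(3) by simp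
qed

lemma marg_triv:
  assumes "a \<in> PiE S D"
  shows "marg D S S h a = h a"
proof -
  have "merge S a (\<lambda>_. undefined) = a"
    using assms by (auto simp: merge_def PiE_def extensional_def)
  then show ?thesis unfolding marg_def by simp
qed

lemma marg_nonneg:
  assumes "a \<in> PiE S D" "S \<subseteq> A" "\<And>x. x \<in> PiE A D \<Longrightarrow> h x \<ge> 0"
  shows "marg D A S h a \<ge> 0"
  unfolding marg_def
proof (rule sum_nonneg)
  fix b assume "b \<in> PiE (A - S) D"
  then have "merge S a b \<in> PiE (S \<union> (A - S)) D" using merge_PiE assms(1) by blast
  moreover have "S \<union> (A - S) = A" using assms(2) by auto
  ultimately show "h (merge S a b) \<ge> 0" using assms(3) by simp
qed

definition cross :: "'n set \<Rightarrow> 'n set \<Rightarrow> bool" where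
  "cross f X \<longleftrightarrow> f \<inter> X \<noteq> {} \<and> f - X \<noteq> {}"

definition conn :: "'n set set \<Rightarrow> 'n set \<Rightarrow> bool" where
  "conn E S \<longleftrightarrow> (\<forall>X. X \<inter> S \<noteq> {} \<longrightarrow> S - X \<noteq> {} \<longrightarrow> (\<exists>f\<in>E. f \<subseteq> S \<and> cross f X))"

definition PP :: "('n, 'v, 's) ctf \<Rightarrow> 'n set \<Rightarrow> ('v \<Rightarrow> 's) \<Rightarrow> real" where
  "PP F S x = (\<Prod>i\<in>S. bel F i (restrict x (clq F i))) /
              (\<Prod>e\<in>{e \<in> edges F. e \<subseteq> S}. sbel F e (restrict x (sep F e)))"

lemma cross_two: "cross {x, y} X \<longleftrightarrow> (x \<in> X \<and> y \<notin> X) \<or> (y \<in> X \<and> x \<notin> X)"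
  unfolding cross_def by auto

lemma cross_compl: "cross f (- X) \<longleftrightarrow> cross f X"
  unfolding cross_def by auto

lemma conn_part:
  assumes "conn E S" "{x, y} \<in> E" "{x, y} \<subseteq> S" "x \<in> X" "y \<notin> X"
    and "\<forall>g\<in>E. g \<subseteq> S \<longrightarrow> cross g X \<longrightarrow> g = {x, y}"
  shows "conn E (S \<inter> X)"
  unfolding conn_def
proof (intro allI impI)
  fix Y assume Y: "Y \<inter> (S \<inter> X) \<noteq> {}" "S \<inter> X - Y \<noteq> {}"
  define Y' where "Y' = (Y \<inter> X) \<union> (if x \<in> Y then - X else {})"
  have "Y' \<inter> S \<noteq> {}" "S - Y' \<noteq> {}" using Y unfolding Y'_def by auto
  then obtain g where g: "g \<in> E" "g \<subseteq> S" "cross g Y'" using assms(1) unfolding conn_def by blast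
  have "g \<subseteq> X"
  proof (rule ccontr)
    assume nX: "\<not> g \<subseteq> X"
    show False
    proof (cases "g \<inter> X = {}")
      case True
      then show False using g(3) unfolding cross_def Y'_def by (auto split: if_splits)
    next
      case False
      then have "cross g X" using nX unfolding cross_def by auto
      then have "g = {x, y}" using assms(6) g by blast
      then show False using g(3) assms(4,5) unfolding cross_def Y'_def by (auto split: if_splits)
    qed
  qed
  then have "cross g Y" using g(3) unfolding cross_def Y'_def by (auto split: if_splits)
  then show "\<exists>f\<in>E. f \<subseteq> S \<inter> X \<and> cross f Y" using g \<open>g \<subseteq> X\<close> by blast
qed

lemma restrict_PiE_sub:
  assumes "z \<in> PiE A D" "T \<subseteq> A"
  shows "restrict z T \<in> PiE T D"
  using assms by auto

lemma merge_PiE_eq: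
  assumes "a \<in> PiE S D" "b \<in> PiE (A - S) D" "S \<subseteq> A"
  shows "merge S a b \<in> PiE A D"
proof -
  have "merge S a b \<in> PiE (S \<union> (A - S)) D" using merge_PiE assms by blast
  moreover have "S \<union> (A - S) = A" using assms by auto
  ultimately show ?thesis by simp
qed

locale mctx =
  fixes D :: "'v \<Rightarrow> 's set" and F :: "('n, 'v, 's) ctf" and S0 :: "'n set"
  assumes Dfin: "\<forall>v. finite (D v)"
    and card2: "\<forall>e\<in>edges F. card e = 2"
    and br: "\<forall>e\<in>edges F. e \<subseteq> S0 \<longrightarrow> (\<exists>X. cross e X \<and> (\<forall>f\<in>edges F. cross f X \<longrightarrow> f = e))"
    and rip: "\<forall>w X a b. a \<in> S0 \<longrightarrow> b \<in> S0 \<longrightarrow> w \<in> clq F a \<longrightarrow> w \<in> clq F b \<longrightarrow> a \<in> X \<longrightarrow> b \<notin> X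
                \<longrightarrow> (\<exists>f\<in>edges F. cross f X \<and> (\<forall>u\<in>f. w \<in> clq F u))"
    and fin: "\<forall>i\<in>S0. finite (clq F i)"
    and bnn: "\<forall>i\<in>S0. \<forall>a\<in>PiE (clq F i) D. bel F i a \<ge> 0"
    and snn: "\<forall>e\<in>edges F. e \<subseteq> S0 \<longrightarrow> (\<forall>a\<in>PiE (sep F e) D. sbel F e a \<ge> 0)"
    and val: "\<forall>x y. {x, y} \<in> edges F \<longrightarrow> {x, y} \<subseteq> S0 \<longrightarrow> sep F {x, y} = clq F x \<inter> clq F y"
    and cal: "\<forall>x y. {x, y} \<in> edges F \<longrightarrow> {x, y} \<subseteq> S0 \<longrightarrow>
                (\<forall>a\<in>PiE (sep F {x, y}) D. marg D (clq F x) (sep F {x, y}) (bel F x) a = sbel F {x, y} a)"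
begin

lemma sep_sub:
  assumes "e \<in> edges F" "e \<subseteq> S" "S \<subseteq> S0"
  shows "sep F e \<subseteq> \<Union> (clq F ` S)"
proof -
  obtain x y where e: "e = {x, y}" using card2 assms(1) by (meson card_2_iff)
  then have "sep F e = clq F x \<inter> clq F y" using val assms by auto
  then show ?thesis using e assms by auto
qed

lemma PP_cong:
  assumes "S \<subseteq> S0" "\<And>v. v \<in> \<Union> (clq F ` S) \<Longrightarrow> z v = z' v"
  shows "PP F S z = PP F S z'"
proof -
  have "(\<Prod>i\<in>S. bel F i (restrict z (clq F i))) = (\<Prod>i\<in>S. bel F i (restrict z' (clq F i)))"
  proof (rule prod.cong[OF refl])
    fix i assume "i \<in> S"
    then have "restrict z (clq F i) = restrict z' (clq F i)"
      using assms(2) by (intro restrict_ext) auto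
    then show "bel F i (restrict z (clq F i)) = bel F i (restrict z' (clq F i))" by simp
  qed
  moreover have "(\<Prod>e\<in>{e \<in> edges F. e \<subseteq> S}. sbel F e (restrict z (sep F e))) =
                 (\<Prod>e\<in>{e \<in> edges F. e \<subseteq> S}. sbel F e (restrict z' (sep F e)))"
  proof (rule prod.cong[OF refl])
    fix e assume "e \<in> {e \<in> edges F. e \<subseteq> S}"
    then have "sep F e \<subseteq> \<Union> (clq F ` S)" using sep_sub assms(1) by blast
    then have "restrict z (sep F e) = restrict z' (sep F e)"
      using assms(2) by (intro restrict_ext) auto
    then show "sbel F e (restrict z (sep F e)) = sbel F e (restrict z' (sep F e))" by simp
  qed
  ultimately show ?thesis unfolding PP_def by simp
qed

lemma PP_nonneg:
  assumes "S \<subseteq> S0" "z \<in> PiE (\<Union> (clq F ` S)) D"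
  shows "PP F S z \<ge> 0"
proof -
  have "(\<Prod>i\<in>S. bel F i (restrict z (clq F i))) \<ge> 0"
  proof (rule prod_nonneg)
    fix i assume i: "i \<in> S"
    then have "restrict z (clq F i) \<in> PiE (clq F i) D"
      using assms(2) by (intro restrict_PiE_sub) auto
    then show "bel F i (restrict z (clq F i)) \<ge> 0" using bnn i assms(1) by blast
  qed
  moreover have "(\<Prod>e\<in>{e \<in> edges F. e \<subseteq> S}. sbel F e (restrict z (sep F e))) \<ge> 0"
  proof (rule prod_nonneg)
    fix e assume e: "e \<in> {e \<in> edges F. e \<subseteq> S}"
    then have "sep F e \<subseteq> \<Union> (clq F ` S)" using sep_sub assms(1) by blast
    then have "restrict z (sep F e) \<in> PiE (sep F e) D"
      using assms(2) by (intro restrict_PiE_sub)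
    then show "sbel F e (restrict z (sep F e)) \<ge> 0" using snn e assms(1) by blast
  qed
  ultimately show ?thesis unfolding PP_def by simp
qed

lemma finU:
  assumes "finite S" "S \<subseteq> S0"
  shows "finite (\<Union> (clq F ` S))"
  using assms fin by auto

end

context mctx begin

lemma PP_split:
  assumes S: "S \<subseteq> S0" "finite S" and f: "f \<in> edges F" "f \<subseteq> S" "cross f X"
    and uniq: "\<forall>g\<in>edges F. cross g X \<longrightarrow> g = f"
  shows "PP F S z = PP F (S \<inter> X) z * PP F (S - X) z / sbel F f (restrict z (sep F f))"
proof -
  let ?E = "\<lambda>S. {e \<in> edges F. e \<subseteq> S}"
  have finE: "finite (?E S)"
    by (rule finite_subset[of _ "Pow S"]) (use S in auto)
  have ES: "?E S = insert f (?E (S \<inter> X) \<union> ?E (S - X))"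
  proof
    show "?E S \<subseteq> insert f (?E (S \<inter> X) \<union> ?E (S - X))"
    proof
      fix e assume e: "e \<in> ?E S"
      show "e \<in> insert f (?E (S \<inter> X) \<union> ?E (S - X))"
      proof (cases "cross e X")
        case True then show ?thesis using uniq e by auto
      next
        case False then show ?thesis using e unfolding cross_def by auto
      qed
    qed
    show "insert f (?E (S \<inter> X) \<union> ?E (S - X)) \<subseteq> ?E S" using f by auto
  qed
  have fn: "f \<notin> ?E (S \<inter> X) \<union> ?E (S - X)" using f(3) unfolding cross_def by auto
  have dj: "?E (S \<inter> X) \<inter> ?E (S - X) = {}"
  proof -
    have "\<And>e. e \<in> edges F \<Longrightarrow> e \<noteq> {}" using card2 by fastforce
    then show ?thesis by auto
  qed
  have fin1: "finite (?E (S \<inter> X))" "finite (?E (S - X))" using finE ES by auto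
  let ?b = "\<lambda>e. sbel F e (restrict z (sep F e))"
  let ?c = "\<lambda>i. bel F i (restrict z (clq F i))"
  have pe: "(\<Prod>e\<in>?E S. ?b e) = ?b f * ((\<Prod>e\<in>?E (S \<inter> X). ?b e) * (\<Prod>e\<in>?E (S - X). ?b e))"
    unfolding ES using fn fin1 dj by (simp add: prod.union_disjoint)
  have Sd: "S = (S \<inter> X) \<union> (S - X)" by auto
  have pc: "(\<Prod>i\<in>S. ?c i) = (\<Prod>i\<in>S \<inter> X. ?c i) * (\<Prod>i\<in>S - X. ?c i)"
    by (subst Sd, rule prod.union_disjoint) (use S in auto)
  show ?thesis unfolding PP_def pe pc
    by (simp add: divide_inverse inverse_mult_distrib ac_simps)
qed

lemma M:
  "S \<subseteq> S0 \<Longrightarrow> finite S \<Longrightarrow> conn (edges F) S \<Longrightarrow> i \<in> S \<Longrightarrow> a \<in> PiE (clq F i) D \<Longrightarrow>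
   marg D (\<Union> (clq F ` S)) (clq F i) (PP F S) a = bel F i a"
proof (induction "card S" arbitrary: S i a rule: less_induct)
  case less
  note S = less.prems
  show ?case
  proof (cases "S = {i}")
    case True
    have E0: "{e \<in> edges F. e \<subseteq> {i}} = {}"
    proof -
      have "\<And>e. e \<in> edges F \<Longrightarrow> e \<subseteq> {i} \<Longrightarrow> False"
      proof -
        fix e assume "e \<in> edges F" "e \<subseteq> {i}"
        then have "card e = 2" "card e \<le> 1" using card2 card_mono[of "{i}" e] by auto
        then show False by simp
      qed
      then show ?thesis by blast
    qed
    then have "PP F S = (\<lambda>x. bel F i (restrict x (clq F i)))"
      unfolding PP_def True E0 by simp
    moreover have "\<Union> (clq F ` S) = clq F i" using True by simp
    ultimately show ?thesis using marg_triv[OF S(5)] S(5) by simp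
  next
    case False
    then obtain j where "j \<in> S" "j \<noteq> i" using S(4) by blast
    then have "{i} \<inter> S \<noteq> {}" "S - {i} \<noteq> {}" using S(4) by auto
    then obtain f where f: "f \<in> edges F" "f \<subseteq> S" "cross f {i}"
      using S(3) unfolding conn_def by blast
    obtain X0 where X0: "cross f X0" "\<forall>g\<in>edges F. cross g X0 \<longrightarrow> g = f"
      using br f S(1) by blast
    define X where "X = (if i \<in> X0 then X0 else - X0)"
    have X: "i \<in> X" "cross f X" "\<forall>g\<in>edges F. cross g X \<longrightarrow> g = f"
      using X0 unfolding X_def by (auto simp: cross_compl)
    obtain p q where pq: "f = {p, q}" "p \<noteq> q" using card2 f(1) by (meson card_2_iff)
    have disj: "(p \<in> X \<and> q \<notin> X) \<or> (q \<in> X \<and> p \<notin> X)"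
      using X(2) pq(1) cross_two by metis
    obtain x y where xy: "f = {x, y}" "x \<in> X" "y \<notin> X"
    proof -
      from disj show thesis
      proof
        assume "p \<in> X \<and> q \<notin> X" then show thesis using that[of p q] pq by simp
      next
        assume "q \<in> X \<and> p \<notin> X" then show thesis using that[of q p] pq by (simp add: insert_commute)
      qed
    qed
    have xyS: "x \<in> S" "y \<in> S" using xy f by auto
    let ?S1 = "S \<inter> X" and ?S2 = "S - X"
    have S2e: "?S2 = S \<inter> - X" by auto
    have fE: "{x, y} \<in> edges F" "{y, x} \<in> edges F" using f(1) xy(1) by (auto simp: insert_commute)
    have fSS: "{x, y} \<subseteq> S" "{y, x} \<subseteq> S" using f(2) xy(1) by auto
    have un: "\<forall>g\<in>edges F. g \<subseteq> S \<longrightarrow> cross g X \<longrightarrow> g = {x, y}" using X(3) xy(1) by blast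
    have un': "\<forall>g\<in>edges F. g \<subseteq> S \<longrightarrow> cross g (- X) \<longrightarrow> g = {y, x}"
      using un by (simp add: cross_compl insert_commute)
    have c1: "conn (edges F) ?S1"
      by (rule conn_part[OF S(3) fE(1) fSS(1) xy(2) xy(3) un])
    have yx: "y \<in> - X" "x \<notin> - X" using xy by auto
    have c2: "conn (edges F) ?S2"
      unfolding S2e by (rule conn_part[OF S(3) fE(2) fSS(2) yx un'])
    have lt1: "card ?S1 < card S" using xyS xy S(2) by (intro psubset_card_mono) auto
    have lt2: "card ?S2 < card S" using xyS xy S(2) by (intro psubset_card_mono) auto
    have IH1: "\<And>j b. j \<in> ?S1 \<Longrightarrow> b \<in> PiE (clq F j) D \<Longrightarrow>
        marg D (\<Union> (clq F ` ?S1)) (clq F j) (PP F ?S1) b = bel F j b"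
      using less.hyps[OF lt1] S c1 by auto
    have IH2: "\<And>j b. j \<in> ?S2 \<Longrightarrow> b \<in> PiE (clq F j) D \<Longrightarrow>
        marg D (\<Union> (clq F ` ?S2)) (clq F j) (PP F ?S2) b = bel F j b"
      using less.hyps[OF lt2] S c2 by auto
    define U1 where "U1 = \<Union> (clq F ` ?S1)"
    define U2 where "U2 = \<Union> (clq F ` ?S2)"
    define T where "T = sep F f"
    have fS0: "{x, y} \<subseteq> S0" using xyS S(1) by auto
    have T: "T = clq F x \<inter> clq F y" using val xy f fS0 unfolding T_def by auto
    have UU: "\<Union> (clq F ` S) = U1 \<union> U2" unfolding U1_def U2_def by auto
    have TU1: "T \<subseteq> U1" using T xy xyS unfolding U1_def by auto
    have TU2: "T \<subseteq> U2" using T xy xyS unfolding U2_def by auto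
    have U12: "U1 \<inter> U2 = T"
    proof
      show "U1 \<inter> U2 \<subseteq> T"
      proof
        fix w assume "w \<in> U1 \<inter> U2"
        then obtain a' b' where ab: "a' \<in> ?S1" "b' \<in> ?S2" "w \<in> clq F a'" "w \<in> clq F b'"
          unfolding U1_def U2_def by auto
        have "\<exists>g\<in>edges F. cross g X \<and> (\<forall>u\<in>g. w \<in> clq F u)"
        proof -
          have "a' \<in> S0" "b' \<in> S0" using ab S(1) by auto
          moreover have "a' \<in> X" "b' \<notin> X" using ab by auto
          ultimately show ?thesis using rip[rule_format, of a' b' w X] ab(3,4) by blast
        qed
        then obtain g where g: "g \<in> edges F" "cross g X" "\<forall>u\<in>g. w \<in> clq F u" by blast
        then have "g = f" using X(3) by auto
        then show "w \<in> T" using g xy T by auto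
      qed
      show "T \<subseteq> U1 \<inter> U2" using TU1 TU2 by auto
    qed
    have S1sub: "?S1 \<subseteq> S0" "?S2 \<subseteq> S0" using S(1) by auto
    have finU1: "finite U1" unfolding U1_def using finU S1sub S(2) by auto
    have finU2: "finite U2" unfolding U2_def using finU S1sub S(2) by auto
    have iS1: "i \<in> ?S1" using S(4) X(1) by auto
    have CiU1: "clq F i \<subseteq> U1" using iS1 unfolding U1_def by auto
    have CyU2: "clq F y \<subseteq> U2" using xyS xy unfolding U2_def by auto
    have CxU1: "clq F x \<subseteq> U1" using xyS xy unfolding U1_def by auto
    have Ty: "T \<subseteq> clq F y" "T \<subseteq> clq F x" using T by auto
    have sepyx: "sep F {y, x} = T" "sbel F {y, x} = sbel F f" using xy T_def by (auto simp: insert_commute)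
    have fyx: "{y, x} \<in> edges F" "{y, x} \<subseteq> S0" using xy f fS0 by (auto simp: insert_commute)
    have m2: "\<And>t. t \<in> PiE T D \<Longrightarrow> marg D U2 T (PP F ?S2) t = sbel F f t"
    proof -
      fix t assume t: "t \<in> PiE T D"
      have "marg D U2 T (PP F ?S2) t = marg D (clq F y) T (marg D U2 (clq F y) (PP F ?S2)) t"
        by (simp only: marg_comp[OF Ty(1) CyU2])
      also have "\<dots> = marg D (clq F y) T (bel F y) t"
        by (rule marg_cong[OF t Ty(1)]) (use IH2 xyS xy in \<open>auto simp: U2_def\<close>)
      also have "\<dots> = sbel F f t"
      proof -
        have cy: "\<forall>a\<in>PiE (sep F {y, x}) D. marg D (clq F y) (sep F {y, x}) (bel F y) a = sbel F {y, x} a"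
          using cal fyx by blast
        then show ?thesis using t sepyx by simp
      qed
      finally show "marg D U2 T (PP F ?S2) t = sbel F f t" .
    qed
    have m1: "\<And>t. t \<in> PiE T D \<Longrightarrow> marg D U1 T (PP F ?S1) t = sbel F f t"
    proof -
      fix t assume t: "t \<in> PiE T D"
      have "marg D U1 T (PP F ?S1) t = marg D (clq F x) T (marg D U1 (clq F x) (PP F ?S1)) t"
        by (simp only: marg_comp[OF Ty(2) CxU1])
      also have "\<dots> = marg D (clq F x) T (bel F x) t"
        by (rule marg_cong[OF t Ty(2)]) (use IH1 xyS xy in \<open>auto simp: U1_def\<close>)
      also have "\<dots> = sbel F f t"
      proof -
        have cx: "\<forall>a\<in>PiE (sep F {x, y}) D. marg D (clq F x) (sep F {x, y}) (bel F x) a = sbel F {x, y} a"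
          using cal fE(1) fS0 by blast
        then show ?thesis using t xy(1) T_def by simp
      qed
      finally show "marg D U1 T (PP F ?S1) t = sbel F f t" .
    qed
    have zero: "\<And>y1. y1 \<in> PiE U1 D \<Longrightarrow> sbel F f (restrict y1 T) = 0 \<Longrightarrow> PP F ?S1 y1 = 0"
    proof -
      fix y1 assume y1: "y1 \<in> PiE U1 D" and z: "sbel F f (restrict y1 T) = 0"
      let ?t = "restrict y1 T"
      have t: "?t \<in> PiE T D" using y1 TU1 by (rule restrict_PiE_sub)
      have s0: "(\<Sum>b\<in>PiE (U1 - T) D. PP F ?S1 (merge T ?t b)) = 0"
        using m1[OF t] z unfolding marg_def by simp
      have nn: "\<forall>b\<in>PiE (U1 - T) D. PP F ?S1 (merge T ?t b) \<ge> 0"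
      proof
        fix b assume "b \<in> PiE (U1 - T) D"
        then have "merge T ?t b \<in> PiE U1 D" using merge_PiE_eq[OF t _ TU1] by blast
        then show "PP F ?S1 (merge T ?t b) \<ge> 0" using PP_nonneg S1sub unfolding U1_def by blast
      qed
      have finP: "finite (PiE (U1 - T) D)" using finU1 Dfin by (intro finite_PiE) auto
      have b0: "restrict y1 (U1 - T) \<in> PiE (U1 - T) D" using y1 by (intro restrict_PiE_sub) auto
      have all0: "\<forall>b\<in>PiE (U1 - T) D. PP F ?S1 (merge T ?t b) = 0"
        using s0 nn finP by (simp add: sum_nonneg_eq_0_iff)
      have "PP F ?S1 (merge T ?t (restrict y1 (U1 - T))) = 0"
        using all0 b0 by blast
      moreover have "PP F ?S1 (merge T ?t (restrict y1 (U1 - T))) = PP F ?S1 y1"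
      proof (rule PP_cong[OF S1sub(1)])
        fix v assume "v \<in> \<Union> (clq F ` ?S1)"
        then have "v \<in> U1" unfolding U1_def .
        then show "merge T ?t (restrict y1 (U1 - T)) v = y1 v" by (simp add: merge_def)
      qed
      ultimately show "PP F ?S1 y1 = 0" by simp
    qed
    have dec: "\<Union> (clq F ` S) - clq F i = (U1 - clq F i) \<union> (U2 - U1)" using UU CiU1 by auto
    have dj: "(U1 - clq F i) \<inter> (U2 - U1) = {}" by auto
    have U2T: "U2 - U1 = U2 - T" using U12 by auto
    have "marg D (\<Union> (clq F ` S)) (clq F i) (PP F S) a =
          (\<Sum>z1\<in>PiE (U1 - clq F i) D. \<Sum>z2\<in>PiE (U2 - U1) D.
              PP F S (merge (clq F i) a (merge (U1 - clq F i) z1 z2)))"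
      unfolding marg_def dec by (rule sum_PiE_split[OF dj])
    also have "\<dots> = (\<Sum>z1\<in>PiE (U1 - clq F i) D. PP F ?S1 (merge (clq F i) a z1))"
    proof (rule sum.cong[OF refl])
      fix z1 assume z1: "z1 \<in> PiE (U1 - clq F i) D"
      define y1 where "y1 = merge (clq F i) a z1"
      define t where "t = restrict y1 T"
      have y1: "y1 \<in> PiE U1 D" unfolding y1_def using merge_PiE_eq[OF S(5) z1 CiU1] .
      have t: "t \<in> PiE T D" unfolding t_def using y1 TU1 by (rule restrict_PiE_sub)
      have eq: "PP F S (merge (clq F i) a (merge (U1 - clq F i) z1 z2)) =
                PP F ?S1 y1 * PP F ?S2 (merge T t z2) / sbel F f t" for z2
      proof -
        let ?m = "merge (clq F i) a (merge (U1 - clq F i) z1 z2)"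
        have "PP F S ?m = PP F ?S1 ?m * PP F ?S2 ?m / sbel F f (restrict ?m (sep F f))"
          by (rule PP_split[OF S(1) S(2) f(1) f(2) X(2) X(3)])
        moreover have "PP F ?S1 ?m = PP F ?S1 y1"
        proof (rule PP_cong[OF S1sub(1)])
          fix v assume "v \<in> \<Union> (clq F ` ?S1)"
          then have "v \<in> U1" unfolding U1_def .
          then show "?m v = y1 v" unfolding y1_def by (simp add: merge_def)
        qed
        moreover have "PP F ?S2 ?m = PP F ?S2 (merge T t z2)"
        proof (rule PP_cong[OF S1sub(2)])
          fix v assume v: "v \<in> \<Union> (clq F ` ?S2)"
          show "?m v = merge T t z2 v"
          proof (cases "v \<in> T")
            case True
            then show ?thesis using TU1 by (auto simp: merge_def t_def y1_def)
          next
            case False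
            then have "v \<notin> U1" using v U12 unfolding U2_def by auto
            then show ?thesis using False CiU1 by (auto simp: merge_def)
          qed
        qed
        moreover have "restrict ?m (sep F f) = t"
          unfolding t_def T_def[symmetric] using TU1
          by (intro restrict_ext) (auto simp: merge_def y1_def)
        ultimately show ?thesis by simp
      qed
      have "(\<Sum>z2\<in>PiE (U2 - U1) D. PP F S (merge (clq F i) a (merge (U1 - clq F i) z1 z2)))
          = (\<Sum>z2\<in>PiE (U2 - T) D. PP F ?S1 y1 * PP F ?S2 (merge T t z2) / sbel F f t)"
        unfolding eq U2T by simp
      also have "\<dots> = PP F ?S1 y1 * marg D U2 T (PP F ?S2) t / sbel F f t"
        unfolding marg_def by (simp add: sum_divide_distrib sum_distrib_left)
      also have "\<dots> = PP F ?S1 y1 * sbel F f t / sbel F f t" using m2[OF t] by simp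
      also have "\<dots> = PP F ?S1 y1"
      proof (cases "sbel F f t = 0")
        case True
        then have "PP F ?S1 y1 = 0" using zero[OF y1] unfolding t_def by simp
        then show ?thesis by simp
      next
        case False then show ?thesis by simp
      qed
      finally show "(\<Sum>z2\<in>PiE (U2 - U1) D. PP F S (merge (clq F i) a (merge (U1 - clq F i) z1 z2)))
          = PP F ?S1 (merge (clq F i) a z1)" unfolding y1_def .
    qed
    also have "\<dots> = marg D U1 (clq F i) (PP F ?S1) a" unfolding marg_def by simp
    also have "\<dots> = bel F i a" using IH1[OF iS1 S(5)] unfolding U1_def .
    finally show ?thesis .
  qed
qed

end

lemma adj_sym: "(i, j) \<in> adj E \<longleftrightarrow> (j, i) \<in> adj E"
  unfolding adj_def by (auto simp: insert_commute)

lemma adj_mono: "E \<subseteq> E' \<Longrightarrow> adj E \<subseteq> adj E'"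
  unfolding adj_def by auto

lemma rt_mono: "E \<subseteq> E' \<Longrightarrow> (a, b) \<in> (adj E)\<^sup>* \<Longrightarrow> (a, b) \<in> (adj E')\<^sup>*"
  using rtrancl_mono[OF adj_mono] by blast

lemma rt_cross:
  assumes "(a, b) \<in> (adj E)\<^sup>*" "a \<in> X" "b \<notin> X"
  shows "\<exists>i j. {i, j} \<in> E \<and> i \<in> X \<and> j \<notin> X"
  using assms
proof (induction rule: rtrancl_induct)
  case base then show ?case by simp
next
  case (step y z)
  show ?case
  proof (cases "y \<in> X")
    case True
    then have "{y, z} \<in> E" "y \<in> X" "z \<notin> X" using step unfolding adj_def by auto
    then show ?thesis by blast
  next
    case False then show ?thesis using step by auto
  qed
qed

lemma connected_in_conn:
  assumes "connected_in E K"
  shows "conn E K"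
  unfolding conn_def
proof (intro allI impI)
  fix X assume "X \<inter> K \<noteq> {}" "K - X \<noteq> {}"
  then obtain a b where ab: "a \<in> X" "a \<in> K" "b \<in> K" "b \<notin> X" by auto
  then have "(a, b) \<in> (adj {e \<in> E. e \<subseteq> K})\<^sup>*" using assms unfolding connected_in_def by auto
  then obtain i j where "{i, j} \<in> {e \<in> E. e \<subseteq> K}" "i \<in> X" "j \<notin> X"
    using rt_cross[of a b "{e \<in> E. e \<subseteq> K}" X] ab(1,4) by blast
  then show "\<exists>f\<in>E. f \<subseteq> K \<and> cross f X" unfolding cross_def by blast
qed

lemma conn_card:
  assumes fin: "finite K" and EK: "\<forall>e\<in>EK. e \<subseteq> K" and r: "r \<in> K"
    and reach: "\<forall>x\<in>K. (r, x) \<in> (adj EK)\<^sup>*"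
  shows "card K - 1 \<le> card EK"
proof -
  let ?R = "adj EK"
  define dist where "dist x = (LEAST n. (r, x) \<in> ?R ^^ n)" for x
  have dex: "\<And>x. x \<in> K \<Longrightarrow> (r, x) \<in> ?R ^^ dist x"
  proof -
    fix x assume "x \<in> K"
    then have "(r, x) \<in> ?R\<^sup>*" using reach by blast
    then have "\<exists>n. (r, x) \<in> ?R ^^ n" by (simp add: rtrancl_power)
    then show "(r, x) \<in> ?R ^^ dist x" unfolding dist_def by (rule LeastI_ex)
  qed
  have dle: "\<And>x n. (r, x) \<in> ?R ^^ n \<Longrightarrow> dist x \<le> n"
    unfolding dist_def by (rule Least_le)
  define par where "par x = (SOME z. (r, z) \<in> ?R ^^ (dist x - 1) \<and> (z, x) \<in> ?R)" for x
  have par: "(r, par x) \<in> ?R ^^ (dist x - 1) \<and> (par x, x) \<in> ?R \<and> dist x \<ge> 1" if x: "x \<in> K - {r}" for x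
  proof -
    have d: "(r, x) \<in> ?R ^^ dist x" using dex x by auto
    have "dist x \<noteq> 0"
    proof
      assume "dist x = 0"
      then have "(r, x) \<in> ?R ^^ 0" using d by simp
      then show False using x by simp
    qed
    then obtain m where m: "dist x = Suc m" by (cases "dist x") auto
    have "(r, x) \<in> ?R ^^ m O ?R" using d m by simp
    then obtain z where "(r, z) \<in> ?R ^^ m" "(z, x) \<in> ?R" by blast
    then have "\<exists>z. (r, z) \<in> ?R ^^ (dist x - 1) \<and> (z, x) \<in> ?R" using m by auto
    then have "(r, par x) \<in> ?R ^^ (dist x - 1) \<and> (par x, x) \<in> ?R"
      unfolding par_def by (rule someI_ex)
    then show ?thesis using m by simp
  qed
  define phi where "phi x = {par x, x}" for x
  have phiE: "phi x \<in> EK" if "x \<in> K - {r}" for x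
  proof -
    have "(par x, x) \<in> adj EK" using par[OF that] by blast
    then show ?thesis unfolding phi_def adj_def by simp
  qed
  have inj: "inj_on phi (K - {r})"
  proof (rule inj_onI)
    fix x x' assume x: "x \<in> K - {r}" and x': "x' \<in> K - {r}" and eq: "phi x = phi x'"
    show "x = x'"
    proof (rule ccontr)
      assume ne: "x \<noteq> x'"
      have "{par x, x} = {par x', x'}" using eq unfolding phi_def .
      then have e: "x = par x'" "x' = par x" using ne unfolding doubleton_eq_iff by blast+
      have p1: "(r, par x') \<in> ?R ^^ (dist x' - 1)" "dist x' \<ge> 1" using par[OF x'] by auto
      have p2: "(r, par x) \<in> ?R ^^ (dist x - 1)" "dist x \<ge> 1" using par[OF x] by auto
      have "(r, x) \<in> ?R ^^ (dist x' - 1)" using p1(1) e(1) by simp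
      then have "dist x \<le> dist x' - 1" by (rule dle)
      moreover have "(r, x') \<in> ?R ^^ (dist x - 1)" using p2(1) e(2) by simp
      then have "dist x' \<le> dist x - 1" by (rule dle)
      ultimately show False using p1(2) p2(2) by linarith
    qed
  qed
  have "EK \<subseteq> Pow K" using EK by auto
  then have finEK: "finite EK" using fin by (meson finite_Pow_iff finite_subset)
  have im: "phi ` (K - {r}) \<subseteq> EK" using phiE by blast
  have "card (K - {r}) \<le> card EK" by (rule card_inj_on_le[OF inj im finEK])
  then show ?thesis using r fin by simp
qed

definition Inv :: "('v \<Rightarrow> 's set) \<Rightarrow> ('n, 'v, 's) ctf \<Rightarrow> bool" where
  "Inv D F \<longleftrightarrow> finite (nodes F)
     \<and> (\<forall>e\<in>edges F. card e = 2 \<and> e \<subseteq> nodes F)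
     \<and> (\<forall>i\<in>nodes F. finite (clq F i))
     \<and> (\<forall>i\<in>nodes F. \<forall>a\<in>PiE (clq F i) D. bel F i a \<ge> 0)
     \<and> (\<forall>e\<in>edges F. \<forall>a\<in>PiE (sep F e) D. sbel F e a \<ge> 0)
     \<and> (\<forall>x y. {x, y} \<in> edges F \<longrightarrow> sep F {x, y} = clq F x \<inter> clq F y)
     \<and> (\<forall>x y. {x, y} \<in> edges F \<longrightarrow>
          (\<forall>a\<in>PiE (sep F {x, y}) D. marg D (clq F x) (sep F {x, y}) (bel F x) a = sbel F {x, y} a))
     \<and> (\<forall>e\<in>edges F. \<exists>X. cross e X \<and> (\<forall>f\<in>edges F. cross f X \<longrightarrow> f = e))
     \<and> (\<forall>w X a b. w \<in> clq F a \<longrightarrow> w \<in> clq F b \<longrightarrow> a \<in> X \<longrightarrow> b \<notin> X \<longrightarrow>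
          (a, b) \<in> (adj (edges F))\<^sup>* \<longrightarrow> (\<exists>f\<in>edges F. cross f X \<and> (\<forall>u\<in>f. w \<in> clq F u)))"

lemma InvD:
  assumes "Inv D F"
  shows
    fin: "finite (nodes F)"
    and edg: "\<forall>e\<in>edges F. card e = 2 \<and> e \<subseteq> nodes F"
    and cfin: "\<forall>i\<in>nodes F. finite (clq F i)"
    and bnn: "\<forall>i\<in>nodes F. \<forall>a\<in>PiE (clq F i) D. bel F i a \<ge> 0"
    and snn: "\<forall>e\<in>edges F. \<forall>a\<in>PiE (sep F e) D. sbel F e a \<ge> 0"
    and val: "\<forall>x y. {x, y} \<in> edges F \<longrightarrow> sep F {x, y} = clq F x \<inter> clq F y"
    and cal: "\<forall>x y. {x, y} \<in> edges F \<longrightarrow>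
          (\<forall>a\<in>PiE (sep F {x, y}) D. marg D (clq F x) (sep F {x, y}) (bel F x) a = sbel F {x, y} a)"
    and br: "\<forall>e\<in>edges F. \<exists>X. cross e X \<and> (\<forall>f\<in>edges F. cross f X \<longrightarrow> f = e)"
    and rip: "\<forall>w X a b. w \<in> clq F a \<longrightarrow> w \<in> clq F b \<longrightarrow> a \<in> X \<longrightarrow> b \<notin> X \<longrightarrow>
          (a, b) \<in> (adj (edges F))\<^sup>* \<longrightarrow> (\<exists>f\<in>edges F. cross f X \<and> (\<forall>u\<in>f. w \<in> clq F u))"
proof -
  note C = assms[unfolded Inv_def]
  show "finite (nodes F)" by (rule C[THEN conjunct1])
  show "\<forall>e\<in>edges F. card e = 2 \<and> e \<subseteq> nodes F" by (rule C[THEN conjunct2, THEN conjunct1])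
  show "\<forall>i\<in>nodes F. finite (clq F i)" by (rule C[THEN conjunct2, THEN conjunct2, THEN conjunct1])
  show "\<forall>i\<in>nodes F. \<forall>a\<in>PiE (clq F i) D. bel F i a \<ge> 0" by (rule C[THEN conjunct2, THEN conjunct2, THEN conjunct2, THEN conjunct1])
  show "\<forall>e\<in>edges F. \<forall>a\<in>PiE (sep F e) D. sbel F e a \<ge> 0" by (rule C[THEN conjunct2, THEN conjunct2, THEN conjunct2, THEN conjunct2, THEN conjunct1])
  show "\<forall>x y. {x, y} \<in> edges F \<longrightarrow> sep F {x, y} = clq F x \<inter> clq F y" by (rule C[THEN conjunct2, THEN conjunct2, THEN conjunct2, THEN conjunct2, THEN conjunct2, THEN conjunct1])
  show "\<forall>x y. {x, y} \<in> edges F \<longrightarrow>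
          (\<forall>a\<in>PiE (sep F {x, y}) D. marg D (clq F x) (sep F {x, y}) (bel F x) a = sbel F {x, y} a)" by (rule C[THEN conjunct2, THEN conjunct2, THEN conjunct2, THEN conjunct2, THEN conjunct2, THEN conjunct2, THEN conjunct1])
  show "\<forall>e\<in>edges F. \<exists>X. cross e X \<and> (\<forall>f\<in>edges F. cross f X \<longrightarrow> f = e)" by (rule C[THEN conjunct2, THEN conjunct2, THEN conjunct2, THEN conjunct2, THEN conjunct2, THEN conjunct2, THEN conjunct2, THEN conjunct1])
  show "\<forall>w X a b. w \<in> clq F a \<longrightarrow> w \<in> clq F b \<longrightarrow> a \<in> X \<longrightarrow> b \<notin> X \<longrightarrow>
          (a, b) \<in> (adj (edges F))\<^sup>* \<longrightarrow> (\<exists>f\<in>edges F. cross f X \<and> (\<forall>u\<in>f. w \<in> clq F u))" by (rule C[THEN conjunct2, THEN conjunct2, THEN conjunct2, THEN conjunct2, THEN conjunct2, THEN conjunct2, THEN conjunct2, THEN conjunct2])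
qed

lemma InvI:
  assumes
    "finite (nodes F)"
    "\<forall>e\<in>edges F. card e = 2 \<and> e \<subseteq> nodes F"
    "\<forall>i\<in>nodes F. finite (clq F i)"
    "\<forall>i\<in>nodes F. \<forall>a\<in>PiE (clq F i) D. bel F i a \<ge> 0"
    "\<forall>e\<in>edges F. \<forall>a\<in>PiE (sep F e) D. sbel F e a \<ge> 0"
    "\<forall>x y. {x, y} \<in> edges F \<longrightarrow> sep F {x, y} = clq F x \<inter> clq F y"
    "\<forall>x y. {x, y} \<in> edges F \<longrightarrow>
          (\<forall>a\<in>PiE (sep F {x, y}) D. marg D (clq F x) (sep F {x, y}) (bel F x) a = sbel F {x, y} a)"
    "\<forall>e\<in>edges F. \<exists>X. cross e X \<and> (\<forall>f\<in>edges F. cross f X \<longrightarrow> f = e)"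
    "\<forall>w X a b. w \<in> clq F a \<longrightarrow> w \<in> clq F b \<longrightarrow> a \<in> X \<longrightarrow> b \<notin> X \<longrightarrow>
          (a, b) \<in> (adj (edges F))\<^sup>* \<longrightarrow> (\<exists>f\<in>edges F. cross f X \<and> (\<forall>u\<in>f. w \<in> clq F u))"
  shows "Inv D F"
  unfolding Inv_def using assms by (intro conjI)

lemma rt_nodes:
  assumes "(a, x) \<in> (adj E)\<^sup>*" "\<forall>e\<in>E. e \<subseteq> N" "a \<in> N"
  shows "x \<in> N"
  using assms(1)
proof (induction rule: rtrancl_induct)
  case base then show ?case using assms by simp
next
  case (step y z) then show ?case using assms(2) unfolding adj_def by auto
qed

lemma rt_start:
  assumes "(a, b) \<in> (adj E)\<^sup>*" "a \<noteq> b" "\<forall>e\<in>E. e \<subseteq> N"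
  shows "a \<in> N"
  using assms(1,2)
proof (cases rule: converse_rtranclE)
  case (step z) then show ?thesis using assms(3) unfolding adj_def by auto
qed simp

lemma comp_tree:
  assumes "a \<in> nodes F"
  shows "{j. (a, j) \<in> (adj (edges F))\<^sup>*} \<in> trees F"
  using assms unfolding trees_def by auto

lemma card2_obtain:
  assumes "card e = 2"
  obtains x y where "e = {x, y}" "x \<noteq> y"
  using assms by (meson card_2_iff)

lemma wfD:
  assumes "ctf_wf D F"
  shows "finite (nodes F)" "\<forall>e\<in>edges F. card e = 2 \<and> e \<subseteq> nodes F"
    "\<forall>K \<in> trees F. card {e \<in> edges F. e \<subseteq> K} = card K - 1"
    "\<forall>i \<in> nodes F. finite (clq F i)" "\<forall>i \<in> nodes F. \<forall>a \<in> PiE (clq F i) D. bel F i a \<ge> 0"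
    "\<forall>e \<in> edges F. \<forall>a \<in> PiE (sep F e) D. sbel F e a \<ge> 0"
  using assms unfolding ctf_wf_def by blast+

lemma validD:
  assumes "valid_tree F K"
  shows "\<forall>i j. {i, j} \<in> edges F \<and> i \<in> K \<longrightarrow> sep F {i, j} \<noteq> {} \<and> sep F {i, j} = clq F i \<inter> clq F j"
    "\<forall>v. {i \<in> K. v \<in> clq F i} \<noteq> {} \<longrightarrow> connected_in (edges F) {i \<in> K. v \<in> clq F i}"
  using assms unfolding valid_tree_def by blast+

lemma init_br:
  assumes wf: "ctf_wf D F" and e: "e \<in> edges F"
  shows "\<exists>X. cross e X \<and> (\<forall>f\<in>edges F. cross f X \<longrightarrow> f = e)"
proof -
  let ?E = "edges F"
  have Enodes: "\<forall>e\<in>?E. e \<subseteq> nodes F" and card2: "\<forall>e\<in>?E. card e = 2"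
    using wfD(2)[OF wf] by auto
  have "card e = 2" using card2 e by blast
  then obtain a b where ab: "e = {a, b}" "a \<noteq> b" by (rule card2_obtain)
  define R' where "R' = adj (?E - {e})"
  define X where "X = {x. (a, x) \<in> R'\<^sup>*}"
  have bX: "b \<notin> X"
  proof
    assume bX: "b \<in> X"
    have aN: "a \<in> nodes F" using ab e Enodes by auto
    define K where "K = {j. (a, j) \<in> (adj ?E)\<^sup>*}"
    have K: "K \<in> trees F" unfolding K_def using comp_tree[OF aN] .
    define EK where "EK = {f \<in> ?E. f \<subseteq> K}"
    have cardEK: "card EK = card K - 1" unfolding EK_def by (rule bspec[OF wfD(3)[OF wf] K])
    have aK: "a \<in> K" unfolding K_def by simp
    have "(a, b) \<in> adj ?E" using e ab unfolding adj_def by simp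
    then have bK: "b \<in> K" unfolding K_def by simp
    have "e \<subseteq> K" using ab aK bK by simp
    then have eEK: "e \<in> EK" using e unfolding EK_def by simp
    have KN: "K \<subseteq> nodes F" unfolding K_def using rt_nodes[OF _ Enodes aN] by auto
    have finK: "finite K" using KN wfD(1)[OF wf] by (rule finite_subset)
    have s1: "(a, x) \<in> R'\<^sup>*" if "(a, x) \<in> (adj ?E)\<^sup>*" for x
      using that
    proof (induction rule: rtrancl_induct)
      case base then show ?case by simp
    next
      case (step y z)
      show ?case
      proof (cases "{y, z} = e")
        case True
        then have "z = a \<or> z = b" using ab by blast
        moreover have "(a, b) \<in> R'\<^sup>*" using bX unfolding X_def by simp
        ultimately show ?thesis by auto
      next
        case False
        moreover have "{y, z} \<in> ?E" using step(2) unfolding adj_def by simp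
        ultimately have "(y, z) \<in> R'" unfolding R'_def adj_def by simp
        then show ?thesis using step by (meson rtrancl.rtrancl_into_rtrancl)
      qed
    qed
    have s2: "(a, x) \<in> (adj (EK - {e}))\<^sup>*" if "(a, x) \<in> R'\<^sup>*" for x
      using that
    proof (induction rule: rtrancl_induct)
      case base then show ?case by simp
    next
      case (step y z)
      have "(a, y) \<in> (adj ?E)\<^sup>*" using step(1) unfolding R'_def by (rule rt_mono[rotated]) auto
      then have yK: "y \<in> K" unfolding K_def by simp
      have yz: "{y, z} \<in> ?E - {e}" using step(2) unfolding R'_def adj_def by simp
      then have "(y, z) \<in> adj ?E" unfolding adj_def by simp
      then have "z \<in> K" using yK unfolding K_def by (simp add: rtrancl.rtrancl_into_rtrancl)
      then have "{y, z} \<in> EK - {e}" using yz yK unfolding EK_def by simp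
      then have "(y, z) \<in> adj (EK - {e})" unfolding adj_def by simp
      then show ?case using step by (meson rtrancl.rtrancl_into_rtrancl)
    qed
    have reach: "\<forall>x\<in>K. (a, x) \<in> (adj (EK - {e}))\<^sup>*"
    proof
      fix x assume "x \<in> K"
      then have "(a, x) \<in> (adj ?E)\<^sup>*" unfolding K_def by simp
      then show "(a, x) \<in> (adj (EK - {e}))\<^sup>*" by (intro s2 s1)
    qed
    have "card K - 1 \<le> card (EK - {e})"
    proof (rule conn_card[OF finK _ aK reach])
      show "\<forall>e\<in>EK - {e}. e \<subseteq> K" unfolding EK_def by blast
    qed
    moreover have "EK \<subseteq> Pow K" unfolding EK_def by auto
    then have "finite EK" using finK by (meson finite_Pow_iff finite_subset)
    then have "card (EK - {e}) = card EK - 1" using eEK by simp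
    moreover have "card K \<ge> 2"
    proof -
      have "{a, b} \<subseteq> K" using aK bK by auto
      then have "card {a, b} \<le> card K" using finK by (rule card_mono[rotated])
      then show ?thesis using ab by simp
    qed
    ultimately show False using cardEK by linarith
  qed
  have aX: "a \<in> X" unfolding X_def by simp
  have "cross e X" using aX bX ab unfolding cross_def by auto
  moreover have "\<forall>f\<in>?E. cross f X \<longrightarrow> f = e"
  proof (intro ballI impI)
    fix f assume f: "f \<in> ?E" "cross f X"
    have "card f = 2" using card2 f by blast
    then obtain u v where uv: "f = {u, v}" "u \<noteq> v" by (rule card2_obtain)
    have "cross {u, v} X" using f(2) uv(1) by simp
    then have disj: "(u \<in> X \<and> v \<notin> X) \<or> (v \<in> X \<and> u \<notin> X)" by (simp add: cross_two)
    obtain p q where pq: "f = {p, q}" "p \<in> X" "q \<notin> X"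
    proof -
      from disj show thesis
      proof
        assume "u \<in> X \<and> v \<notin> X" then show thesis using that[of u v] uv by simp
      next
        assume "v \<in> X \<and> u \<notin> X" then show thesis using that[of v u] uv by (simp add: insert_commute)
      qed
    qed
    show "f = e"
    proof (rule ccontr)
      assume "f \<noteq> e"
      then have "{p, q} \<in> ?E - {e}" using f(1) pq(1) by simp
      then have "(p, q) \<in> R'" unfolding R'_def adj_def by simp
      moreover have "(a, p) \<in> R'\<^sup>*" using pq(2) unfolding X_def by simp
      ultimately have "(a, q) \<in> R'\<^sup>*" by (rule rtrancl.rtrancl_into_rtrancl[rotated])
      then have "q \<in> X" unfolding X_def by simp
      then show False using pq by simp
    qed
  qed
  ultimately show ?thesis by blast
qed

lemma init_Inv:
  assumes wf: "ctf_wf D F" and vc: "\<forall>K \<in> trees F. valid_tree F K \<and> calibrated D F K"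
  shows "Inv D F"
proof -
  let ?E = "edges F"
  have Enodes: "\<forall>e\<in>?E. e \<subseteq> nodes F" using wfD(2)[OF wf] by blast
  have comp: "\<exists>K\<in>trees F. x \<in> K" if "x \<in> nodes F" for x
  proof
    show "x \<in> {j. (x, j) \<in> (adj (edges F))\<^sup>*}" by simp
  qed (rule comp_tree[OF that])
  have val: "\<forall>x y. {x, y} \<in> ?E \<longrightarrow> sep F {x, y} = clq F x \<inter> clq F y"
  proof (intro allI impI)
    fix x y assume xy: "{x, y} \<in> ?E"
    then have "x \<in> nodes F" using Enodes by auto
    then obtain K where "K \<in> trees F" "x \<in> K" using comp by blast
    then have vt: "valid_tree F K" using vc by blast
    have "sep F {x, y} \<noteq> {} \<and> sep F {x, y} = clq F x \<inter> clq F y"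
      using validD(1)[OF vt, rule_format, OF conjI[OF xy \<open>x \<in> K\<close>]] .
    then show "sep F {x, y} = clq F x \<inter> clq F y" by (rule conjunct2)
  qed
  have cal: "\<forall>x y. {x, y} \<in> ?E \<longrightarrow>
          (\<forall>a\<in>PiE (sep F {x, y}) D. marg D (clq F x) (sep F {x, y}) (bel F x) a = sbel F {x, y} a)"
  proof (intro allI impI)
    fix x y assume xy: "{x, y} \<in> ?E"
    then have "x \<in> nodes F" using Enodes by auto
    then obtain K where "K \<in> trees F" "x \<in> K" using comp by blast
    then have cK: "calibrated D F K" using vc by blast
    note cK2 = cK[unfolded calibrated_def, rule_format, OF conjI[OF xy \<open>x \<in> K\<close>]]
    show "\<forall>a\<in>PiE (sep F {x, y}) D. marg D (clq F x) (sep F {x, y}) (bel F x) a = sbel F {x, y} a"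
    proof
      fix a assume "a \<in> PiE (sep F {x, y}) D"
      then show "marg D (clq F x) (sep F {x, y}) (bel F x) a = sbel F {x, y} a"
        by (rule conjunct1[OF cK2])
    qed
  qed
  have rip: "\<forall>w X a b. w \<in> clq F a \<longrightarrow> w \<in> clq F b \<longrightarrow> a \<in> X \<longrightarrow> b \<notin> X \<longrightarrow>
          (a, b) \<in> (adj ?E)\<^sup>* \<longrightarrow> (\<exists>f\<in>?E. cross f X \<and> (\<forall>u\<in>f. w \<in> clq F u))"
  proof (intro allI impI)
    fix w X a b assume h: "w \<in> clq F a" "w \<in> clq F b" "a \<in> X" "b \<notin> X" "(a, b) \<in> (adj ?E)\<^sup>*"
    have "a \<noteq> b" using h by auto
    then have aN: "a \<in> nodes F" using rt_start[OF h(5) _ Enodes] by simp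
    define K where "K = {j. (a, j) \<in> (adj ?E)\<^sup>*}"
    have K: "K \<in> trees F" unfolding K_def using comp_tree[OF aN] .
    define W where "W = {i \<in> K. w \<in> clq F i}"
    have aW: "a \<in> W" "b \<in> W" using h unfolding W_def K_def by auto
    have vt: "valid_tree F K" using vc K by blast
    have "{i \<in> K. w \<in> clq F i} \<noteq> {}" using aW unfolding W_def by blast
    then have "connected_in ?E W" unfolding W_def by (rule validD(2)[OF vt, rule_format])
    then have "(a, b) \<in> (adj {e \<in> ?E. e \<subseteq> W})\<^sup>*" using aW unfolding connected_in_def by blast
    from rt_cross[OF this h(3) h(4)]
    obtain i j where ij: "{i, j} \<in> {e \<in> ?E. e \<subseteq> W}" "i \<in> X" "j \<notin> X" by blast
    then have "cross {i, j} X" "\<forall>u\<in>{i, j}. w \<in> clq F u" unfolding cross_def W_def by auto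
    then show "\<exists>f\<in>?E. cross f X \<and> (\<forall>u\<in>f. w \<in> clq F u)" using ij by blast
  qed
  have wf': "finite (nodes F)" "\<forall>e\<in>edges F. card e = 2 \<and> e \<subseteq> nodes F"
     "\<forall>i \<in> nodes F. finite (clq F i)" "\<forall>i \<in> nodes F. \<forall>a \<in> PiE (clq F i) D. bel F i a \<ge> 0"
     "\<forall>e \<in> edges F. \<forall>a \<in> PiE (sep F e) D. sbel F e a \<ge> 0"
    by (rule wfD(1,2,4,5,6)[OF wf])+
  have br: "\<forall>e\<in>edges F. \<exists>X. cross e X \<and> (\<forall>f\<in>edges F. cross f X \<longrightarrow> f = e)"
  proof
    fix e assume "e \<in> edges F"
    then show "\<exists>X. cross e X \<and> (\<forall>f\<in>edges F. cross f X \<longrightarrow> f = e)" by (rule init_br[OF wf])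
  qed
  show ?thesis by (rule InvI[OF wf'(1-5) val cal br rip])
qed

lemma Inv_cal:
  assumes "Inv D F"
  shows "\<forall>K \<in> trees F. calibrated D F K"
proof -
  have c: "\<forall>x y. {x, y} \<in> edges F \<longrightarrow>
          (\<forall>a\<in>PiE (sep F {x, y}) D. marg D (clq F x) (sep F {x, y}) (bel F x) a = sbel F {x, y} a)"
    by (rule InvD(7)[OF assms])
  show ?thesis unfolding calibrated_def
  proof (intro ballI allI impI conjI)
    fix K i j a assume h: "{i, j} \<in> edges F \<and> i \<in> K" "a \<in> PiE (sep F {i, j}) D"
    have e1: "{i, j} \<in> edges F" using h(1) by simp
    show "marg D (clq F i) (sep F {i, j}) (bel F i) a = sbel F {i, j} a"
      by (rule c[rule_format, OF e1 h(2)])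
    have e2: "{j, i} \<in> edges F" using e1 by (simp add: insert_commute)
    have a2: "a \<in> PiE (sep F {j, i}) D" using h(2) by (simp add: insert_commute)
    have "marg D (clq F j) (sep F {j, i}) (bel F j) a = sbel F {j, i} a"
      by (rule c[rule_format, OF e2 a2])
    then show "marg D (clq F j) (sep F {i, j}) (bel F j) a = sbel F {i, j} a" by (simp add: insert_commute)
  qed
qed

lemma rt_sym:
  assumes "(a, b) \<in> (adj E)\<^sup>*"
  shows "(b, a) \<in> (adj E)\<^sup>*"
  using assms
proof (induction rule: rtrancl_induct)
  case base then show ?case by simp
next
  case (step y z)
  then have "(z, y) \<in> adj E" using adj_sym by metis
  then show ?case using step(3) by (rule converse_rtrancl_into_rtrancl)
qed

lemma rt_cross_in:
  assumes "(a, b) \<in> (adj E)\<^sup>*" "a \<in> X" "b \<notin> X"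
  shows "\<exists>i j. {i, j} \<in> E \<and> i \<in> X \<and> j \<notin> X \<and> (a, i) \<in> (adj E)\<^sup>* \<and> (a, j) \<in> (adj E)\<^sup>*"
  using assms
proof (induction rule: rtrancl_induct)
  case base then show ?case by simp
next
  case (step y z)
  show ?case
  proof (cases "y \<in> X")
    case True
    have yz: "{y, z} \<in> E" using step(2) unfolding adj_def by simp
    have "(a, z) \<in> (adj E)\<^sup>*" using step(1,2) by (rule rtrancl.rtrancl_into_rtrancl)
    then show ?thesis using yz True step(1) step.prems by blast
  next
    case False then show ?thesis using step.IH step.prems by blast
  qed
qed

lemma rt_map:
  assumes "(a, b) \<in> (adj E')\<^sup>*" "\<And>x y. {x, y} \<in> E' \<Longrightarrow> (h x, h y) \<in> (adj E)\<^sup>*"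
  shows "(h a, h b) \<in> (adj E)\<^sup>*"
  using assms(1)
proof (induction rule: rtrancl_induct)
  case base then show ?case by simp
next
  case (step y z)
  then have "{y, z} \<in> E'" unfolding adj_def by simp
  then have "(h y, h z) \<in> (adj E)\<^sup>*" by (rule assms(2))
  with step(3) show ?case by (rule rtrancl_trans)
qed

lemma comp_conn:
  "conn E {x. (a, x) \<in> (adj E)\<^sup>*}"
  unfolding conn_def
proof (intro allI impI)
  fix X assume h: "X \<inter> {x. (a, x) \<in> (adj E)\<^sup>*} \<noteq> {}" "{x. (a, x) \<in> (adj E)\<^sup>*} - X \<noteq> {}"
  then obtain p q where pq: "p \<in> X" "(a, p) \<in> (adj E)\<^sup>*" "q \<notin> X" "(a, q) \<in> (adj E)\<^sup>*" by blast
  have "(p, q) \<in> (adj E)\<^sup>*" using rt_sym[OF pq(2)] pq(4) by (rule rtrancl_trans)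
  from rt_cross_in[OF this pq(1) pq(3)]
  obtain i j where ij: "{i, j} \<in> E" "i \<in> X" "j \<notin> X" "(p, i) \<in> (adj E)\<^sup>*" "(p, j) \<in> (adj E)\<^sup>*"
    by blast
  have "(a, i) \<in> (adj E)\<^sup>*" using pq(2) ij(4) by (rule rtrancl_trans)
  moreover have "(a, j) \<in> (adj E)\<^sup>*" using pq(2) ij(5) by (rule rtrancl_trans)
  ultimately have "{i, j} \<subseteq> {x. (a, x) \<in> (adj E)\<^sup>*}" by simp
  moreover have "cross {i, j} X" using ij unfolding cross_def by blast
  ultimately show "\<exists>f\<in>E. f \<subseteq> {x. (a, x) \<in> (adj E)\<^sup>*} \<and> cross f X" using ij(1) by blast
qed

lemma conn_joined:
  assumes "conn E T" "a \<in> T" "b \<in> T" "\<forall>e\<in>E. card e = 2"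
  shows "(a, b) \<in> (adj E)\<^sup>*"
proof (rule ccontr)
  assume nb: "(a, b) \<notin> (adj E)\<^sup>*"
  define X where "X = {x. (a, x) \<in> (adj E)\<^sup>*}"
  have "a \<in> X \<inter> T" using assms(2) unfolding X_def by simp
  then have "X \<inter> T \<noteq> {}" by blast
  moreover have "b \<in> T - X" using assms(3) nb unfolding X_def by simp
  then have "T - X \<noteq> {}" by blast
  ultimately obtain f where f: "f \<in> E" "f \<subseteq> T" "cross f X" using assms(1) unfolding conn_def by blast
  then obtain p q where pq: "p \<in> f" "p \<in> X" "q \<in> f" "q \<notin> X" unfolding cross_def by blast
  have "card f = 2" using assms(4) f(1) by blast
  then obtain u v where "f = {u, v}" by (rule card2_obtain)
  then have "f = {p, q}" using pq by blast
  then have "(p, q) \<in> adj E" using f(1) unfolding adj_def by simp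
  then have "q \<in> X" using pq(2) unfolding X_def by (simp add: rtrancl.rtrancl_into_rtrancl)
  then show False using pq(4) by simp
qed

lemma conn_mono: "conn E' T \<Longrightarrow> E' \<subseteq> E \<Longrightarrow> conn E T"
  unfolding conn_def by blast

lemma rip_conn:
  assumes inv: "Inv D F" and T: "conn (edges F) T" and ab: "a \<in> T" "b \<in> T"
    and w: "w \<in> clq F a" "w \<in> clq F b" and X: "a \<in> X" "b \<notin> X"
  shows "\<exists>f\<in>edges F. f \<subseteq> T \<and> cross f X \<and> (\<forall>u\<in>f. w \<in> clq F u)"
proof (rule ccontr)
  assume no: "\<not> (\<exists>f\<in>edges F. f \<subseteq> T \<and> cross f X \<and> (\<forall>u\<in>f. w \<in> clq F u))"
  let ?E = "edges F"
  have card2: "\<forall>e\<in>?E. card e = 2" using InvD(2)[OF inv] by blast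
  define Ew where "Ew = {g \<in> ?E. g \<subseteq> T \<and> (\<forall>u\<in>g. w \<in> clq F u)}"
  define A where "A = {x. (a, x) \<in> (adj Ew)\<^sup>*}"
  have aA: "a \<in> A" unfolding A_def by simp
  have bA: "b \<notin> A"
  proof
    assume "b \<in> A"
    then have "(a, b) \<in> (adj Ew)\<^sup>*" unfolding A_def by simp
    from rt_cross[OF this X(1) X(2)] obtain i j where ij: "{i, j} \<in> Ew" "i \<in> X" "j \<notin> X" by blast
    then have "cross {i, j} X" unfolding cross_def by blast
    then show False using no ij(1) unfolding Ew_def by blast
  qed
  have AT: "A \<subseteq> T"
  proof
    fix x assume "x \<in> A"
    then have "(a, x) \<in> (adj Ew)\<^sup>*" unfolding A_def by simp
    moreover have "\<forall>e\<in>Ew. e \<subseteq> T" unfolding Ew_def by blast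
    ultimately show "x \<in> T" using ab(1) by (rule rt_nodes)
  qed
  define ET where "ET = {g \<in> ?E. g \<subseteq> T - A}"
  define B where "B = {x. (b, x) \<in> (adj ET)\<^sup>*}"
  have bB: "b \<in> B" unfolding B_def by simp
  have BTA: "B \<subseteq> T - A"
  proof
    fix x assume "x \<in> B"
    then have "(b, x) \<in> (adj ET)\<^sup>*" unfolding B_def by simp
    moreover have "\<forall>e\<in>ET. e \<subseteq> T - A" unfolding ET_def by blast
    moreover have "b \<in> T - A" using ab(2) bA by blast
    ultimately show "x \<in> T - A" by (rule rt_nodes)
  qed
  have "B \<inter> T \<noteq> {}" using bB ab(2) by blast
  moreover have "a \<in> T - B" using aA ab(1) BTA by blast
  then have "T - B \<noteq> {}" by blast
  ultimately obtain f0 where f0: "f0 \<in> ?E" "f0 \<subseteq> T" "cross f0 B"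
    using T unfolding conn_def by blast
  have "card f0 = 2" using card2 f0(1) by blast
  then obtain p q where pq: "f0 = {p, q}" "p \<noteq> q" by (rule card2_obtain)
  have "cross {p, q} B" using f0(3) pq(1) by simp
  then have disj: "(p \<in> B \<and> q \<notin> B) \<or> (q \<in> B \<and> p \<notin> B)" by (simp add: cross_two)
  obtain u v where uv: "f0 = {u, v}" "u \<in> B" "v \<notin> B"
  proof -
    from disj show thesis
    proof
      assume "p \<in> B \<and> q \<notin> B" then show thesis using that[of p q] pq by simp
    next
      assume "q \<in> B \<and> p \<notin> B" then show thesis using that[of q p] pq by (simp add: insert_commute)
    qed
  qed
  have uTA: "u \<in> T - A" using uv(2) BTA by blast
  have vT: "v \<in> T" using f0(2) uv(1) by blast
  have vA: "v \<in> A"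
  proof (rule ccontr)
    assume "v \<notin> A"
    then have "f0 \<in> ET" using f0 uv(1) uTA vT unfolding ET_def by blast
    then have "(u, v) \<in> adj ET" using uv(1) unfolding adj_def by simp
    then have "v \<in> B" using uv(2) unfolding B_def by (simp add: rtrancl.rtrancl_into_rtrancl)
    then show False using uv(3) by simp
  qed
  have f0w: "f0 \<notin> Ew"
  proof
    assume "f0 \<in> Ew"
    then have "(v, u) \<in> adj Ew" using uv(1) unfolding adj_def by (simp add: insert_commute)
    then have "u \<in> A" using vA unfolding A_def by (simp add: rtrancl.rtrancl_into_rtrancl)
    then show False using uTA by simp
  qed
  obtain Y0 where Y0: "cross f0 Y0" "\<forall>g\<in>?E. cross g Y0 \<longrightarrow> g = f0"
    using InvD(8)[OF inv] f0(1) by blast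
  define Y where "Y = (if v \<in> Y0 then Y0 else - Y0)"
  have Y: "cross f0 Y" "\<forall>g\<in>?E. cross g Y \<longrightarrow> g = f0" "v \<in> Y"
    using Y0 unfolding Y_def by (auto simp: cross_compl)
  have uY: "u \<notin> Y"
  proof
    assume "u \<in> Y"
    then have "f0 \<subseteq> Y" using Y(3) uv(1) by blast
    then show False using Y(1) unfolding cross_def by blast
  qed
  have AY: "A \<subseteq> Y"
  proof
    fix x assume "x \<in> A"
    then have ax: "(a, x) \<in> (adj Ew)\<^sup>*" unfolding A_def by simp
    have "(a, v) \<in> (adj Ew)\<^sup>*" using vA unfolding A_def by simp
    then have "(v, x) \<in> (adj Ew)\<^sup>*" using rt_sym ax by (meson rtrancl_trans)
    show "x \<in> Y"
    proof (rule ccontr)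
      assume "x \<notin> Y"
      from rt_cross[OF \<open>(v, x) \<in> (adj Ew)\<^sup>*\<close> Y(3) this]
      obtain i j where ij: "{i, j} \<in> Ew" "i \<in> Y" "j \<notin> Y" by blast
      have "{i, j} \<in> ?E" using ij(1) unfolding Ew_def by blast
      moreover have "cross {i, j} Y" using ij unfolding cross_def by blast
      ultimately have "{i, j} = f0" using Y(2) by blast
      then show False using ij(1) f0w by simp
    qed
  qed
  have bY: "b \<in> Y"
  proof (rule ccontr)
    assume nb: "b \<notin> Y"
    have "(a, b) \<in> (adj ?E)\<^sup>*" by (rule conn_joined[OF T ab card2])
    then obtain g where g: "g \<in> ?E" "cross g Y" "\<forall>u\<in>g. w \<in> clq F u"
      using InvD(9)[OF inv, rule_format, OF w(1) w(2) _ nb] aA AY by blast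
    then have "g = f0" using Y(2) by blast
    then have "f0 \<in> Ew" using g f0 unfolding Ew_def by blast
    then show False using f0w by simp
  qed
  have "(b, u) \<in> (adj ET)\<^sup>*" using uv(2) unfolding B_def by simp
  from rt_cross[OF this bY uY] obtain i j where ij: "{i, j} \<in> ET" "i \<in> Y" "j \<notin> Y" by blast
  have "{i, j} \<in> ?E" using ij(1) unfolding ET_def by blast
  moreover have "cross {i, j} Y" using ij unfolding cross_def by blast
  ultimately have "{i, j} = f0" using Y(2) by blast
  then have "v \<in> T - A" using ij(1) uv(1) unfolding ET_def by blast
  then show False using vA by simp
qed

lemma pres_sub:
  assumes inv: "Inv D F" and N: "N' \<subseteq> nodes F"
    and F': "F' = F\<lparr>nodes := N', edges := {e \<in> edges F. e \<subseteq> N'}\<rparr>"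
  shows "Inv D F'"
proof -
  let ?E = "edges F" and ?E' = "{e \<in> edges F. e \<subseteq> N'}"
  have simps: "nodes F' = N'" "edges F' = ?E'" "clq F' = clq F" "bel F' = bel F" "sep F' = sep F" "sbel F' = sbel F"
    using F' by simp_all
  note I = InvD[OF inv]
  show ?thesis unfolding Inv_def simps
  proof (intro conjI)
    show "finite N'" using I(1) N by (rule finite_subset[rotated])
    show "\<forall>e\<in>?E'. card e = 2 \<and> e \<subseteq> N'" using I(2) by blast
    show "\<forall>i\<in>N'. finite (clq F i)" using I(3) N by blast
    show "\<forall>i\<in>N'. \<forall>a\<in>PiE (clq F i) D. bel F i a \<ge> 0" using I(4) N by blast
    show "\<forall>e\<in>?E'. \<forall>a\<in>PiE (sep F e) D. sbel F e a \<ge> 0" using I(5) by blast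
    show "\<forall>x y. {x, y} \<in> ?E' \<longrightarrow> sep F {x, y} = clq F x \<inter> clq F y" using I(6) by blast
    show "\<forall>x y. {x, y} \<in> ?E' \<longrightarrow>
          (\<forall>a\<in>PiE (sep F {x, y}) D. marg D (clq F x) (sep F {x, y}) (bel F x) a = sbel F {x, y} a)"
      using I(7) by blast
    show "\<forall>e\<in>?E'. \<exists>X. cross e X \<and> (\<forall>f\<in>?E'. cross f X \<longrightarrow> f = e)"
    proof
      fix e assume "e \<in> ?E'"
      then obtain X where "cross e X" "\<forall>f\<in>?E. cross f X \<longrightarrow> f = e" using I(8) by blast
      then show "\<exists>X. cross e X \<and> (\<forall>f\<in>?E'. cross f X \<longrightarrow> f = e)" by blast
    qed
    show "\<forall>w X a b. w \<in> clq F a \<longrightarrow> w \<in> clq F b \<longrightarrow> a \<in> X \<longrightarrow> b \<notin> X \<longrightarrow>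
          (a, b) \<in> (adj ?E')\<^sup>* \<longrightarrow> (\<exists>f\<in>?E'. cross f X \<and> (\<forall>u\<in>f. w \<in> clq F u))"
    proof (intro allI impI)
      fix w X a b assume h: "w \<in> clq F a" "w \<in> clq F b" "a \<in> X" "b \<notin> X" "(a, b) \<in> (adj ?E')\<^sup>*"
      define T where "T = {x. (a, x) \<in> (adj ?E')\<^sup>*}"
      have cT: "conn ?E T" unfolding T_def by (rule conn_mono[OF comp_conn]) blast
      have aT: "a \<in> T" "b \<in> T" using h(5) unfolding T_def by simp_all
      have E'N: "\<forall>e\<in>?E'. e \<subseteq> N'" by blast
      have "a \<noteq> b" using h(3,4) by blast
      then have aN: "a \<in> N'" using rt_start[OF h(5) _ E'N] by blast
      have TN: "T \<subseteq> N'"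
      proof
        fix x assume "x \<in> T"
        then have "(a, x) \<in> (adj ?E')\<^sup>*" unfolding T_def by simp
        then show "x \<in> N'" using E'N aN by (rule rt_nodes)
      qed
      obtain f where f: "f \<in> ?E" "f \<subseteq> T" "cross f X" "\<forall>u\<in>f. w \<in> clq F u"
        using rip_conn[OF inv cT aT h(1,2,3,4)] by blast
      then have "f \<in> ?E'" using TN by blast
      then show "\<exists>f\<in>?E'. cross f X \<and> (\<forall>u\<in>f. w \<in> clq F u)" using f by blast
    qed
  qed
qed

lemma pres_restrict:
  assumes "Inv D F" "op_restrict F F'"
  shows "Inv D F'"
proof -
  obtain K T where "K \<in> trees F" "F' = F\<lparr>nodes := nodes F - (K - T),
              edges := {e \<in> edges F. e \<subseteq> nodes F - (K - T)}\<rparr>"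
    using assms(2) unfolding op_restrict_def by blast
  then show ?thesis using pres_sub[OF assms(1)] by blast
qed

lemma br_orient:
  assumes inv: "Inv D F" and e: "{p, q} \<in> edges F"
  shows "\<exists>Y. p \<in> Y \<and> q \<notin> Y \<and> (\<forall>g\<in>edges F. cross g Y \<longrightarrow> g = {p, q})"
proof -
  obtain X where X: "cross {p, q} X" "\<forall>g\<in>edges F. cross g X \<longrightarrow> g = {p, q}"
    using InvD(8)[OF inv] e by blast
  show ?thesis
  proof (cases "p \<in> X")
    case True
    then have "q \<notin> X" using X(1) unfolding cross_def by blast
    then show ?thesis using True X(2) by blast
  next
    case False
    then have "q \<in> X" using X(1) unfolding cross_def by blast
    then have "p \<in> - X" "q \<notin> - X" using False by simp_all
    moreover have "\<forall>g\<in>edges F. cross g (- X) \<longrightarrow> g = {p, q}" using X(2) by (simp add: cross_compl)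
    ultimately show ?thesis by blast
  qed
qed

lemma Inv_edge:
  assumes inv: "Inv D F" and e: "{x, y} \<in> edges F"
  shows "x \<noteq> y" "x \<in> nodes F" "y \<in> nodes F"
proof -
  have "card {x, y} = 2 \<and> {x, y} \<subseteq> nodes F" using InvD(2)[OF inv] e by blast
  then show "x \<noteq> y" "x \<in> nodes F" "y \<in> nodes F" by (auto simp: card_insert_if split: if_splits)
qed

lemma Inv_cal':
  assumes inv: "Inv D F" and e: "{x, y} \<in> edges F" and a: "a \<in> PiE (sep F {x, y}) D"
  shows "marg D (clq F x) (sep F {x, y}) (bel F x) a = sbel F {x, y} a"
  by (rule InvD(7)[OF inv, rule_format, OF e a])

lemma Inv_val':
  assumes inv: "Inv D F" and e: "{x, y} \<in> edges F"
  shows "sep F {x, y} = clq F x \<inter> clq F y"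
  by (rule InvD(6)[OF inv, rule_format, OF e])

lemma adj_edge: "{x, y} \<in> E \<Longrightarrow> (x, y) \<in> (adj E)\<^sup>*"
  unfolding adj_def by (simp add: r_into_rtrancl)

lemma edge_cases:
  assumes "e \<in> {e \<in> E. C \<notin> e} \<union> {{n, C'} | n. {n, C} \<in> E \<and> n \<noteq> C'}"
  obtains "e \<in> E" "C \<notin> e" | n where "e = {n, C'}" "{n, C} \<in> E" "n \<noteq> C'"
  using assms by blast

lemma pres_remove:
  assumes inv: "Inv D F" and op: "op_remove F F'"
  shows "Inv D F'"
proof -
  let ?E = "edges F" and ?N = "nodes F"
  obtain C C' where H: "{C, C'} \<in> ?E \<and> C \<noteq> C' \<and> clq F C \<subseteq> clq F C'
        \<and> nodes F' = ?N - {C}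
        \<and> edges F' = {e \<in> ?E. C \<notin> e} \<union> {{n, C'} | n. {n, C} \<in> ?E \<and> n \<noteq> C'}
        \<and> (\<forall>i \<in> ?N - {C}. clq F' i = clq F i \<and> bel F' i = bel F i)
        \<and> (\<forall>e \<in> ?E. C \<notin> e \<longrightarrow> sep F' e = sep F e \<and> sbel F' e = sbel F e)
        \<and> (\<forall>n. {n, C} \<in> ?E \<and> n \<noteq> C' \<longrightarrow>
              sep F' {n, C'} = clq F n \<inter> clq F C' \<and> sbel F' {n, C'} = sbel F {n, C})"
    using op unfolding op_remove_def by (elim exE) (erule that)
  note h1 = H[THEN conjunct1]
  note h2 = H[THEN conjunct2, THEN conjunct1]
  note h3 = H[THEN conjunct2, THEN conjunct2, THEN conjunct1]
  note hN = H[THEN conjunct2, THEN conjunct2, THEN conjunct2, THEN conjunct1]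
  note hE = H[THEN conjunct2, THEN conjunct2, THEN conjunct2, THEN conjunct2, THEN conjunct1]
  note hc = H[THEN conjunct2, THEN conjunct2, THEN conjunct2, THEN conjunct2, THEN conjunct2, THEN conjunct1]
  note hs = H[THEN conjunct2, THEN conjunct2, THEN conjunct2, THEN conjunct2, THEN conjunct2, THEN conjunct2, THEN conjunct1]
  note hn = H[THEN conjunct2, THEN conjunct2, THEN conjunct2, THEN conjunct2, THEN conjunct2, THEN conjunct2, THEN conjunct2]
  let ?E' = "{e \<in> ?E. C \<notin> e} \<union> {{n, C'} | n. {n, C} \<in> ?E \<and> n \<noteq> C'}"
  note I = InvD[OF inv]
  have CN: "C \<in> ?N" "C' \<in> ?N" using Inv_edge[OF inv h1] by simp_all
  have C'N: "C' \<in> ?N - {C}" using CN h2 by blast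
  have card2: "\<forall>e\<in>?E. card e = 2" using I(2) by blast
  have key: "clq F n \<inter> clq F C' = clq F n \<inter> clq F C" if n: "{n, C} \<in> ?E" "n \<noteq> C'" for n
  proof
    show "clq F n \<inter> clq F C \<subseteq> clq F n \<inter> clq F C'" using h3 by blast
    show "clq F n \<inter> clq F C' \<subseteq> clq F n \<inter> clq F C"
    proof
      fix w assume w: "w \<in> clq F n \<inter> clq F C'"
      obtain Y where Y: "n \<in> Y" "C \<notin> Y" "\<forall>g\<in>?E. cross g Y \<longrightarrow> g = {n, C}"
        using br_orient[OF inv n(1)] by blast
      have "C' \<notin> Y"
      proof
        assume "C' \<in> Y"
        then have "cross {C, C'} Y" using Y(2) unfolding cross_def by blast
        then have "{C, C'} = {n, C}" using Y(3) h1 by blast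
        then show False using n(2) h2 by (auto simp: doubleton_eq_iff)
      qed
      have "(n, C') \<in> (adj ?E)\<^sup>*"
        using adj_edge[OF n(1)] adj_edge[OF h1] by (rule rtrancl_trans)
      then obtain g where g: "g \<in> ?E" "cross g Y" "\<forall>u\<in>g. w \<in> clq F u"
        using I(9)[rule_format, of w n C' Y] w Y(1) \<open>C' \<notin> Y\<close> by blast
      then have "g = {n, C}" using Y(3) by blast
      then show "w \<in> clq F n \<inter> clq F C" using g(3) by blast
    qed
  qed
  have nN: "n \<in> ?N - {C}" if "{n, C} \<in> ?E" for n
    using Inv_edge[OF inv that] by blast
  have E'N: "\<forall>e\<in>?E'. card e = 2 \<and> e \<subseteq> ?N - {C}"
  proof
    fix e assume "e \<in> ?E'"
    then show "card e = 2 \<and> e \<subseteq> ?N - {C}"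
    proof (cases rule: edge_cases)
      case 1
      then show ?thesis using I(2) by blast
    next
      case (2 n)
      then show ?thesis using nN[OF 2(2)] C'N by simp
    qed
  qed
  show ?thesis unfolding Inv_def hN hE
  proof (intro conjI)
    show "finite (?N - {C})" using I(1) by simp
    show "\<forall>e\<in>?E'. card e = 2 \<and> e \<subseteq> ?N - {C}" by (rule E'N)
    show "\<forall>i\<in>?N - {C}. finite (clq F' i)" using I(3) hc by simp
    show "\<forall>i\<in>?N - {C}. \<forall>a\<in>PiE (clq F' i) D. bel F' i a \<ge> 0" using I(4) hc by simp
    show "\<forall>e\<in>?E'. \<forall>a\<in>PiE (sep F' e) D. sbel F' e a \<ge> 0"
    proof
      fix e assume "e \<in> ?E'"
      then show "\<forall>a\<in>PiE (sep F' e) D. sbel F' e a \<ge> 0"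
      proof (cases rule: edge_cases)
        case 1
        have s: "sep F' e = sep F e \<and> sbel F' e = sbel F e" by (rule hs[rule_format, OF 1(1) 1(2)])
        show ?thesis using s I(5) 1(1) by simp
      next
        case (2 n)
        have hn2: "sep F' {n, C'} = clq F n \<inter> clq F C' \<and> sbel F' {n, C'} = sbel F {n, C}"
          by (rule hn[rule_format, OF conjI[OF 2(2) 2(3)]])
        have s: "sep F' e = sep F {n, C}" "sbel F' e = sbel F {n, C}"
          using hn2 2(1) key[OF 2(2,3)] Inv_val'[OF inv 2(2)] by simp_all
        show ?thesis unfolding s using I(5) 2(2) by blast
      qed
    qed
    show "\<forall>x y. {x, y} \<in> ?E' \<longrightarrow> sep F' {x, y} = clq F' x \<inter> clq F' y"
    proof (intro allI impI)
      fix x y assume xy: "{x, y} \<in> ?E'"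
      have "card {x, y} = 2 \<and> {x, y} \<subseteq> ?N - {C}" by (rule bspec[OF E'N xy])
      then have xyN: "x \<in> ?N - {C}" "y \<in> ?N - {C}" by simp_all
      have cx: "clq F' x = clq F x" "clq F' y = clq F y" using hc xyN by simp_all
      show "sep F' {x, y} = clq F' x \<inter> clq F' y"
        using xy
      proof (cases rule: edge_cases)
        case 1
        have s: "sep F' {x, y} = sep F {x, y} \<and> sbel F' {x, y} = sbel F {x, y}"
          by (rule hs[rule_format, OF 1(1) 1(2)])
        show ?thesis using s cx Inv_val'[OF inv 1(1)] by simp
      next
        case (2 n)
        have hn2: "sep F' {n, C'} = clq F n \<inter> clq F C' \<and> sbel F' {n, C'} = sbel F {n, C}"
          by (rule hn[rule_format, OF conjI[OF 2(2) 2(3)]])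
        then have "sep F' {x, y} = clq F n \<inter> clq F C'" using 2(1) by simp
        moreover have "clq F x \<inter> clq F y = clq F n \<inter> clq F C'"
        proof -
          have "(x = n \<and> y = C') \<or> (x = C' \<and> y = n)" using 2(1) by (simp add: doubleton_eq_iff)
          then show ?thesis by (elim disjE conjE) (simp_all add: Int_commute)
        qed
        ultimately show ?thesis using cx by simp
      qed
    qed
    show "\<forall>x y. {x, y} \<in> ?E' \<longrightarrow>
          (\<forall>a\<in>PiE (sep F' {x, y}) D. marg D (clq F' x) (sep F' {x, y}) (bel F' x) a = sbel F' {x, y} a)"
    proof (intro allI impI ballI)
      fix x y a assume xy: "{x, y} \<in> ?E'" and a: "a \<in> PiE (sep F' {x, y}) D"
      have "card {x, y} = 2 \<and> {x, y} \<subseteq> ?N - {C}" by (rule bspec[OF E'N xy])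
      then have xyN: "x \<in> ?N - {C}" "y \<in> ?N - {C}" by simp_all
      have cx: "clq F' x = clq F x" "bel F' x = bel F x" using hc xyN by simp_all
      show "marg D (clq F' x) (sep F' {x, y}) (bel F' x) a = sbel F' {x, y} a"
        using xy
      proof (cases rule: edge_cases)
        case 1
        then have "sep F' {x, y} = sep F {x, y}" "sbel F' {x, y} = sbel F {x, y}" using hs by simp_all
        then show ?thesis using cx Inv_cal'[OF inv 1(1)] a by simp
      next
        case (2 n)
        have S: "sep F' {x, y} = sep F {n, C}" "sbel F' {x, y} = sbel F {n, C}"
          using hn 2 key[OF 2(2,3)] Inv_val'[OF inv 2(2)] by simp_all
        have a': "a \<in> PiE (sep F {n, C}) D" using a S by simp
        have sepnC: "sep F {n, C} = clq F n \<inter> clq F C" by (rule Inv_val'[OF inv 2(2)])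
        have "x = n \<or> x = C'" using 2(1) by (auto simp: doubleton_eq_iff)
        then show ?thesis
        proof
          assume "x = n"
          then show ?thesis using S cx Inv_cal'[OF inv 2(2) a'] by simp
        next
          assume xC': "x = C'"
          have SC: "sep F {n, C} \<subseteq> clq F C" using sepnC by blast
          have "marg D (clq F C') (sep F {n, C}) (bel F C') a =
                marg D (clq F C) (sep F {n, C}) (marg D (clq F C') (clq F C) (bel F C')) a"
            by (simp only: marg_comp[OF SC h3])
          also have "\<dots> = marg D (clq F C) (sep F {n, C}) (bel F C) a"
          proof (rule marg_cong[OF a' SC])
            fix b assume b: "b \<in> PiE (clq F C) D"
            have e1: "{C', C} \<in> ?E" using h1 by (simp add: insert_commute)
            have s1: "sep F {C', C} = clq F C" using Inv_val'[OF inv e1] h3 by blast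
            have s2: "sep F {C, C'} = clq F C" using Inv_val'[OF inv h1] h3 by blast
            have "marg D (clq F C') (sep F {C', C}) (bel F C') b = sbel F {C', C} b"
              using Inv_cal'[OF inv e1] b s1 by simp
            moreover have "marg D (clq F C) (sep F {C, C'}) (bel F C) b = sbel F {C, C'} b"
              using Inv_cal'[OF inv h1] b s2 by simp
            moreover have "marg D (clq F C) (clq F C) (bel F C) b = bel F C b" by (rule marg_triv[OF b])
            ultimately show "marg D (clq F C') (clq F C) (bel F C') b = bel F C b"
              using s1 s2 by (simp add: insert_commute)
          qed
          also have "\<dots> = sbel F {n, C} a"
          proof -
            have e2: "{C, n} \<in> ?E" using 2(2) by (simp add: insert_commute)
            have "marg D (clq F C) (sep F {C, n}) (bel F C) a = sbel F {C, n} a"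
              using Inv_cal'[OF inv e2] a' by (simp add: insert_commute)
            then show ?thesis by (simp add: insert_commute)
          qed
          finally show ?thesis using S cx xC' by simp
        qed
      qed
    qed
    show "\<forall>e\<in>?E'. \<exists>X. cross e X \<and> (\<forall>f\<in>?E'. cross f X \<longrightarrow> f = e)"
    proof
      fix e assume e: "e \<in> ?E'"
      then show "\<exists>X. cross e X \<and> (\<forall>f\<in>?E'. cross f X \<longrightarrow> f = e)"
      proof (cases rule: edge_cases)
        case 1
        obtain X where X: "cross e X" "\<forall>g\<in>?E. cross g X \<longrightarrow> g = e" using I(8) 1(1) by blast
        have CC: "\<not> cross {C, C'} X" using X(2) h1 1(2) by blast
        have "\<forall>f\<in>?E'. cross f X \<longrightarrow> f = e"
        proof (intro ballI impI)
          fix f assume f: "f \<in> ?E'" "cross f X"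
          show "f = e" using f(1)
          proof (cases rule: edge_cases)
            case 1 then show ?thesis using X(2) f(2) by blast
          next
            case (2 m)
            have "cross {m, C'} X" using f(2) 2(1) by simp
            then have "cross {m, C} X" using CC unfolding cross_two by blast
            then have "{m, C} = e" using X(2) 2(2) by blast
            then show ?thesis using \<open>C \<notin> e\<close> by blast
          qed
        qed
        then show ?thesis using X(1) by blast
      next
        case (2 n)
        note n2 = 2
        obtain Y where Y: "n \<in> Y" "C \<notin> Y" "\<forall>g\<in>?E. cross g Y \<longrightarrow> g = {n, C}"
          using br_orient[OF inv 2(2)] by blast
        have C'Y: "C' \<notin> Y"
        proof
          assume "C' \<in> Y"
          then have "cross {C, C'} Y" using Y(2) unfolding cross_def by blast
          then have "{C, C'} = {n, C}" using Y(3) h1 by blast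
          then show False using 2(3) h2 by (auto simp: doubleton_eq_iff)
        qed
        have "cross e Y" using 2(1) Y(1) C'Y unfolding cross_def by blast
        moreover have "\<forall>f\<in>?E'. cross f Y \<longrightarrow> f = e"
        proof (intro ballI impI)
          fix f assume f: "f \<in> ?E'" "cross f Y"
          show "f = e" using f(1)
          proof (cases rule: edge_cases)
            case 1
            then have "f = {n, C}" using Y(3) f(2) by blast
            then show ?thesis using 1(2) by blast
          next
            case (2 m)
            have "cross {m, C'} Y" using f(2) 2(1) by simp
            then have "cross {m, C} Y" using C'Y Y(2) unfolding cross_two by blast
            then have "{m, C} = {n, C}" using Y(3) 2(2) by blast
            then have "m = n" using nN[OF n2(2)] by (auto simp: doubleton_eq_iff)
            then show ?thesis using 2(1) n2(1) by simp
          qed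
        qed
        ultimately show ?thesis by blast
      qed
    qed
    show "\<forall>w X a b. w \<in> clq F' a \<longrightarrow> w \<in> clq F' b \<longrightarrow> a \<in> X \<longrightarrow> b \<notin> X \<longrightarrow>
          (a, b) \<in> (adj ?E')\<^sup>* \<longrightarrow> (\<exists>f\<in>?E'. cross f X \<and> (\<forall>u\<in>f. w \<in> clq F' u))"
    proof (intro allI impI)
      fix w X a b assume h: "w \<in> clq F' a" "w \<in> clq F' b" "a \<in> X" "b \<notin> X" "(a, b) \<in> (adj ?E')\<^sup>*"
      have E'N2: "\<forall>e\<in>?E'. e \<subseteq> ?N - {C}"
      proof
        fix e assume "e \<in> ?E'"
        then have "card e = 2 \<and> e \<subseteq> ?N - {C}" by (rule bspec[OF E'N])
        then show "e \<subseteq> ?N - {C}" by (rule conjunct2)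
      qed
      have "a \<noteq> b" using h(3,4) by blast
      then have aN: "a \<in> ?N - {C}" using rt_start[OF h(5) _ E'N2] by blast
      have bN: "b \<in> ?N - {C}" using h(5) E'N2 aN by (rule rt_nodes)
      have "clq F' a = clq F a" "clq F' b = clq F b" using hc aN bN by simp_all
      then have wa: "w \<in> clq F a" "w \<in> clq F b" using h(1,2) by simp_all
      have "(id a, id b) \<in> (adj ?E)\<^sup>*"
      proof (rule rt_map[OF h(5)])
        fix x y assume xy: "{x, y} \<in> ?E'"
        show "(id x, id y) \<in> (adj ?E)\<^sup>*" using xy
        proof (cases rule: edge_cases)
          case 1 then show ?thesis using adj_edge[OF 1(1)] by simp
        next
          case (2 n)
          have "(n, C') \<in> (adj ?E)\<^sup>*" using adj_edge[OF 2(2)] adj_edge[OF h1] by (rule rtrancl_trans)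
          then have "(C', n) \<in> (adj ?E)\<^sup>*" by (rule rt_sym)
          moreover have "(x = n \<and> y = C') \<or> (x = C' \<and> y = n)" using 2(1) by (simp add: doubleton_eq_iff)
          ultimately show ?thesis using \<open>(n, C') \<in> (adj ?E)\<^sup>*\<close> by (elim disjE conjE) simp_all
        qed
      qed
      then have ab: "(a, b) \<in> (adj ?E)\<^sup>*" by simp
      define X0 where "X0 = (if C' \<in> X then insert C X else X - {C})"
      have aX0: "a \<in> X0" "b \<notin> X0" using h(3,4) aN bN unfolding X0_def by auto
      obtain g where g: "g \<in> ?E" "cross g X0" "\<forall>u\<in>g. w \<in> clq F u"
        using I(9)[rule_format, OF wa aX0 ab] by blast
      show "\<exists>f\<in>?E'. cross f X \<and> (\<forall>u\<in>f. w \<in> clq F' u)"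
      proof (cases "C \<in> g")
        case False
        then have gE': "g \<in> ?E'" using g(1) by (intro UnI1) simp
        have gN: "g \<subseteq> ?N - {C}" using bspec[OF E'N2 gE'] .
        have "cross g X" using g(2) False unfolding cross_def X0_def by (auto split: if_splits)
        moreover have "\<forall>u\<in>g. w \<in> clq F' u"
        proof
          fix u assume u: "u \<in> g"
          then have "clq F' u = clq F u" using gN hc by blast
          then show "w \<in> clq F' u" using g(3) u by simp
        qed
        ultimately show ?thesis using gE' by blast
      next
        case True
        have "card g = 2" using card2 g(1) by blast
        then obtain p q where pq: "g = {p, q}" "p \<noteq> q" by (rule card2_obtain)
        obtain m where m: "g = {m, C}" "m \<noteq> C"
        proof (cases "C = p")
          case True then show thesis using that[of q] pq by (simp add: insert_commute)
        next
          case False then have "C = q" using \<open>C \<in> g\<close> pq by blast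
          then show thesis using that[of p] pq by simp
        qed
        have mC': "m \<noteq> C'"
        proof
          assume "m = C'"
          then have "\<not> cross g X0" using m(1) h2 unfolding cross_def X0_def by (auto split: if_splits)
          then show False using g(2) by simp
        qed
        have mE: "{m, C} \<in> ?E" using g(1) m(1) by simp
        have "{m, C'} \<in> {{n, C'} | n. {n, C} \<in> ?E \<and> n \<noteq> C'}" using mE mC' by blast
        then have new: "{m, C'} \<in> ?E'" by (rule UnI2)
        have mN: "m \<in> ?N - {C}" using nN[OF mE] .
        have cg: "cross {m, C} X0" using g(2) m(1) by simp
        have "cross {m, C'} X"
        proof (cases "C' \<in> X")
          case True
          then have "C \<in> X0" unfolding X0_def by simp
          moreover have "m \<in> X0 \<longleftrightarrow> m \<in> X" using m(2) True unfolding X0_def by simp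
          ultimately show ?thesis using cg True unfolding cross_two by blast
        next
          case False
          then have "C \<notin> X0" unfolding X0_def by simp
          moreover have "m \<in> X0 \<longleftrightarrow> m \<in> X" using m(2) False unfolding X0_def by simp
          ultimately show ?thesis using cg False unfolding cross_two by blast
        qed
        moreover have "\<forall>u\<in>{m, C'}. w \<in> clq F' u"
        proof -
          have "w \<in> clq F m" "w \<in> clq F C'" using g(3) m(1) h3 by auto
          moreover have "clq F' m = clq F m" "clq F' C' = clq F C'" using hc mN C'N by simp_all
          ultimately show ?thesis by simp
        qed
        ultimately show ?thesis using new by blast
      qed
    qed
  qed
qed

lemma tree_closed:
  assumes "K \<in> trees F" "x \<in> K" "(x, y) \<in> (adj (edges F))\<^sup>*"
  shows "y \<in> K"
proof -
  obtain k where K: "K = {j. (k, j) \<in> (adj (edges F))\<^sup>*}" using assms(1) unfolding trees_def by blast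
  have "(k, x) \<in> (adj (edges F))\<^sup>*" using assms(2) K by simp
  then have "(k, y) \<in> (adj (edges F))\<^sup>*" using assms(3) by (rule rtrancl_trans)
  then show ?thesis using K by simp
qed

lemma tree_closed_edge:
  assumes "K \<in> trees F" "{x, y} \<in> edges F"
  shows "x \<in> K \<longleftrightarrow> y \<in> K"
proof -
  have "{y, x} \<in> edges F" using assms(2) by (simp add: insert_commute)
  then show ?thesis using tree_closed[OF assms(1)] adj_edge assms(2) by metis
qed

lemma pres_local:
  assumes inv: "Inv D F" and op: "op_local D F F'"
  shows "Inv D F'"
proof -
  let ?E = "edges F" and ?N = "nodes F"
  obtain K v R where K: "K \<in> trees F" and H:
     "R \<subseteq> {i \<in> K. v \<in> clq F i} \<and> connected_in ?E R
        \<and> (\<forall>e \<in> {e \<in> ?E. e \<subseteq> K \<and> v \<in> sep F e \<and> \<not> e \<subseteq> R}. sep F e - {v} \<noteq> {})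
        \<and> nodes F' = ?N \<and> edges F' = ?E
        \<and> (\<forall>i \<in> ?N. if i \<in> {i \<in> K. v \<in> clq F i} - R
              then clq F' i = clq F i - {v} \<and> bel F' i = marg D (clq F i) (clq F i - {v}) (bel F i)
              else clq F' i = clq F i \<and> bel F' i = bel F i)
        \<and> (\<forall>e \<in> ?E. if e \<in> {e \<in> ?E. e \<subseteq> K \<and> v \<in> sep F e \<and> \<not> e \<subseteq> R}
              then sep F' e = sep F e - {v} \<and> sbel F' e = marg D (sep F e) (sep F e - {v}) (sbel F e)
              else sep F' e = sep F e \<and> sbel F' e = sbel F e)"
    using op unfolding op_local_def Let_def by (elim bexE exE) (erule that)
  define CV where "CV = {i \<in> K. v \<in> clq F i}"
  define ME where "ME = {e \<in> ?E. e \<subseteq> K \<and> v \<in> sep F e \<and> \<not> e \<subseteq> R}"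
  note H' = H[folded CV_def ME_def]
  note hR = H'[THEN conjunct1]
  note hRc = H'[THEN conjunct2, THEN conjunct1]
  note hN = H'[THEN conjunct2, THEN conjunct2, THEN conjunct2, THEN conjunct1]
  note hE = H'[THEN conjunct2, THEN conjunct2, THEN conjunct2, THEN conjunct2, THEN conjunct1]
  note hc = H'[THEN conjunct2, THEN conjunct2, THEN conjunct2, THEN conjunct2, THEN conjunct2, THEN conjunct1]
  note hs = H'[THEN conjunct2, THEN conjunct2, THEN conjunct2, THEN conjunct2, THEN conjunct2, THEN conjunct2]
  note I = InvD[OF inv]
  have c1: "clq F' i = clq F i - {v}" "bel F' i = marg D (clq F i) (clq F i - {v}) (bel F i)"
    if "i \<in> ?N" "i \<in> CV - R" for i
    using hc[rule_format, OF that(1)] that(2) by simp_all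
  have c2: "clq F' i = clq F i" "bel F' i = bel F i" if "i \<in> ?N" "i \<notin> CV - R" for i
    using hc[rule_format, OF that(1)] that(2) by simp_all
  have s1: "sep F' e = sep F e - {v}" "sbel F' e = marg D (sep F e) (sep F e - {v}) (sbel F e)"
    if "e \<in> ?E" "e \<in> ME" for e
    using hs[rule_format, OF that(1)] that(2) by simp_all
  have s2: "sep F' e = sep F e" "sbel F' e = sbel F e" if "e \<in> ?E" "e \<notin> ME" for e
    using hs[rule_format, OF that(1)] that(2) by simp_all
  have csub: "clq F' i \<subseteq> clq F i" "clq F i - {v} \<subseteq> clq F' i" if "i \<in> ?N" for i
  proof -
    show "clq F' i \<subseteq> clq F i" using c1[OF that] c2[OF that] by (cases "i \<in> CV - R") auto
    show "clq F i - {v} \<subseteq> clq F' i" using c1[OF that] c2[OF that] by (cases "i \<in> CV - R") auto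
  qed
  have ssub: "sep F' e \<subseteq> sep F e" if "e \<in> ?E" for e
    using s1[OF that] s2[OF that] by (cases "e \<in> ME") auto
  have KN: "K \<subseteq> ?N"
  proof -
    obtain k where "k \<in> ?N" "K = {j. (k, j) \<in> (adj ?E)\<^sup>*}" using K unfolding trees_def by blast
    then show ?thesis using rt_nodes[of k _ ?E ?N] I(2) by blast
  qed
  have edgeK: "x \<in> K \<longleftrightarrow> y \<in> K" if "{x, y} \<in> ?E" for x y
    by (rule tree_closed_edge[OF K that])
  show ?thesis unfolding Inv_def hN hE
  proof (intro conjI)
    show "finite ?N" by (rule I(1))
    show "\<forall>e\<in>?E. card e = 2 \<and> e \<subseteq> ?N" by (rule I(2))
    show "\<forall>i\<in>?N. finite (clq F' i)"
    proof
      fix i assume "i \<in> ?N"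
      then show "finite (clq F' i)" using csub(1) I(3) by (meson finite_subset)
    qed
    show "\<forall>i\<in>?N. \<forall>a\<in>PiE (clq F' i) D. bel F' i a \<ge> 0"
    proof (intro ballI)
      fix i a assume i: "i \<in> ?N" and a: "a \<in> PiE (clq F' i) D"
      show "bel F' i a \<ge> 0"
      proof (cases "i \<in> CV - R")
        case True
        have bn: "\<forall>x\<in>PiE (clq F i) D. bel F i x \<ge> 0" using I(4) i by blast
        have "marg D (clq F i) (clq F i - {v}) (bel F i) a \<ge> 0"
          by (rule marg_nonneg) (use a c1[OF i True] bn in auto)
        then show ?thesis using c1[OF i True] by simp
      next
        case False then show ?thesis using c2[OF i False] a I(4) i by simp
      qed
    qed
    show "\<forall>e\<in>?E. \<forall>a\<in>PiE (sep F' e) D. sbel F' e a \<ge> 0"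
    proof (intro ballI)
      fix e a assume e: "e \<in> ?E" and a: "a \<in> PiE (sep F' e) D"
      show "sbel F' e a \<ge> 0"
      proof (cases "e \<in> ME")
        case True
        have bn: "\<forall>x\<in>PiE (sep F e) D. sbel F e x \<ge> 0" using I(5) e by blast
        have "marg D (sep F e) (sep F e - {v}) (sbel F e) a \<ge> 0"
          by (rule marg_nonneg) (use a s1[OF e True] bn in auto)
        then show ?thesis using s1[OF e True] by simp
      next
        case False then show ?thesis using s2[OF e False] a I(5) e by simp
      qed
    qed
    show "\<forall>x y. {x, y} \<in> ?E \<longrightarrow> sep F' {x, y} = clq F' x \<inter> clq F' y"
    proof (intro allI impI)
      fix x y assume xy: "{x, y} \<in> ?E"
      have xN: "x \<in> ?N" "y \<in> ?N" using Inv_edge[OF inv xy] by simp_all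
      have val: "sep F {x, y} = clq F x \<inter> clq F y" by (rule Inv_val'[OF inv xy])
      show "sep F' {x, y} = clq F' x \<inter> clq F' y"
      proof (cases "{x, y} \<in> ME")
        case True
        then have inK: "x \<in> K" "y \<in> K" "v \<in> clq F x" "v \<in> clq F y" "\<not> {x, y} \<subseteq> R"
          unfolding ME_def using val by auto
        then have "x \<in> CV - R \<or> y \<in> CV - R" unfolding CV_def by auto
        then show ?thesis
          using s1[OF xy True] val csub[OF xN(1)] csub[OF xN(2)] c1[OF xN(1)] c1[OF xN(2)] by auto
      next
        case False
        have eq: "clq F' x \<inter> clq F' y = clq F x \<inter> clq F y"
        proof (cases "x \<in> CV - R \<or> y \<in> CV - R")
          case True
          then have "x \<in> K" "y \<in> K" using edgeK[OF xy] unfolding CV_def by auto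
          moreover have "\<not> {x, y} \<subseteq> R" using True by auto
          ultimately have "v \<notin> sep F {x, y}" using False xy unfolding ME_def by auto
          then have "v \<notin> clq F x \<inter> clq F y" using val by simp
          then show ?thesis using csub[OF xN(1)] csub[OF xN(2)] by auto
        next
          case False
          then show ?thesis using c2[OF xN(1)] c2[OF xN(2)] by simp
        qed
        show ?thesis using s2[OF xy False] val eq by simp
      qed
    qed
    show "\<forall>x y. {x, y} \<in> ?E \<longrightarrow>
          (\<forall>a\<in>PiE (sep F' {x, y}) D. marg D (clq F' x) (sep F' {x, y}) (bel F' x) a = sbel F' {x, y} a)"
    proof (intro allI impI ballI)
      fix x y a assume xy: "{x, y} \<in> ?E" and a: "a \<in> PiE (sep F' {x, y}) D"
      have xN: "x \<in> ?N" "y \<in> ?N" using Inv_edge[OF inv xy] by simp_all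
      have val: "sep F {x, y} = clq F x \<inter> clq F y" by (rule Inv_val'[OF inv xy])
      have SC: "sep F {x, y} \<subseteq> clq F x" using val by blast
      have calb: "marg D (clq F x) (sep F {x, y}) (bel F x) b = sbel F {x, y} b"
        if "b \<in> PiE (sep F {x, y}) D" for b
        by (rule Inv_cal'[OF inv xy that])
      show "marg D (clq F' x) (sep F' {x, y}) (bel F' x) a = sbel F' {x, y} a"
      proof (cases "{x, y} \<in> ME")
        case True
        have S: "sep F' {x, y} = sep F {x, y} - {v}"
          "sbel F' {x, y} = marg D (sep F {x, y}) (sep F {x, y} - {v}) (sbel F {x, y})"
          by (rule s1[OF xy True])+
        have a': "a \<in> PiE (sep F {x, y} - {v}) D" using a S by simp
        have sub1: "sep F {x, y} - {v} \<subseteq> sep F {x, y}" by blast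
        have base: "marg D (clq F x) (sep F {x, y} - {v}) (bel F x) a
            = marg D (sep F {x, y}) (sep F {x, y} - {v}) (sbel F {x, y}) a"
        proof -
          have "marg D (clq F x) (sep F {x, y} - {v}) (bel F x) a =
                marg D (sep F {x, y}) (sep F {x, y} - {v}) (marg D (clq F x) (sep F {x, y}) (bel F x)) a"
            by (simp only: marg_comp[OF sub1 SC])
          also have "\<dots> = marg D (sep F {x, y}) (sep F {x, y} - {v}) (sbel F {x, y}) a"
            by (rule marg_cong[OF a' sub1]) (rule calb)
          finally show ?thesis .
        qed
        show ?thesis
        proof (cases "x \<in> CV - R")
          case True
          have sub2: "sep F {x, y} - {v} \<subseteq> clq F x - {v}" "clq F x - {v} \<subseteq> clq F x" using SC by blast+
          have "marg D (clq F x - {v}) (sep F {x, y} - {v}) (marg D (clq F x) (clq F x - {v}) (bel F x)) a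
              = marg D (clq F x) (sep F {x, y} - {v}) (bel F x) a"
            by (rule marg_comp[OF sub2])
          then show ?thesis using c1[OF xN(1) True] S base by simp
        next
          case False
          then show ?thesis using c2[OF xN(1) False] S base by simp
        qed
      next
        case False
        have S: "sep F' {x, y} = sep F {x, y}" "sbel F' {x, y} = sbel F {x, y}"
          by (rule s2[OF xy False])+
        have a': "a \<in> PiE (sep F {x, y}) D" using a S by simp
        show ?thesis
        proof (cases "x \<in> CV - R")
          case True
          then have "x \<in> K" "y \<in> K" using edgeK[OF xy] unfolding CV_def by auto
          moreover have "\<not> {x, y} \<subseteq> R" using True by auto
          ultimately have "v \<notin> sep F {x, y}" using False xy unfolding ME_def by auto
          then have sub2: "sep F {x, y} \<subseteq> clq F x - {v}" "clq F x - {v} \<subseteq> clq F x" using SC by blast+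
          have "marg D (clq F x - {v}) (sep F {x, y}) (marg D (clq F x) (clq F x - {v}) (bel F x)) a
              = marg D (clq F x) (sep F {x, y}) (bel F x) a"
            by (rule marg_comp[OF sub2])
          then show ?thesis using c1[OF xN(1) True] S calb[OF a'] by simp
        next
          case False
          then show ?thesis using c2[OF xN(1) False] S calb[OF a'] by simp
        qed
      qed
    qed
    show "\<forall>e\<in>?E. \<exists>X. cross e X \<and> (\<forall>f\<in>?E. cross f X \<longrightarrow> f = e)" by (rule I(8))
    show "\<forall>w X a b. w \<in> clq F' a \<longrightarrow> w \<in> clq F' b \<longrightarrow> a \<in> X \<longrightarrow> b \<notin> X \<longrightarrow>
          (a, b) \<in> (adj ?E)\<^sup>* \<longrightarrow> (\<exists>f\<in>?E. cross f X \<and> (\<forall>u\<in>f. w \<in> clq F' u))"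
    proof (intro allI impI)
      fix w X a b assume h: "w \<in> clq F' a" "w \<in> clq F' b" "a \<in> X" "b \<notin> X" "(a, b) \<in> (adj ?E)\<^sup>*"
      have EN: "\<forall>e\<in>?E. e \<subseteq> ?N" using I(2) by blast
      have "a \<noteq> b" using h(3,4) by blast
      then have aN: "a \<in> ?N" using rt_start[OF h(5) _ EN] by blast
      have bN: "b \<in> ?N" using h(5) EN aN by (rule rt_nodes)
      have wa: "w \<in> clq F a" "w \<in> clq F b" using h(1,2) csub(1)[OF aN] csub(1)[OF bN] by blast+
      show "\<exists>f\<in>?E. cross f X \<and> (\<forall>u\<in>f. w \<in> clq F' u)"
      proof (cases "w = v")
        case False
        obtain g where g: "g \<in> ?E" "cross g X" "\<forall>u\<in>g. w \<in> clq F u"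
          using I(9)[rule_format, OF wa h(3) h(4) h(5)] by blast
        have "\<forall>u\<in>g. w \<in> clq F' u"
        proof
          fix u assume u: "u \<in> g"
          then have "u \<in> ?N" using EN g(1) by blast
          then show "w \<in> clq F' u" using csub(2) g(3) u False by blast
        qed
        then show ?thesis using g by blast
      next
        case True
        define T where "T = (if a \<in> K then R else {x. (a, x) \<in> (adj ?E)\<^sup>*})"
        have good: "\<forall>u\<in>T. u \<in> ?N \<longrightarrow> clq F' u = clq F u"
        proof (intro ballI impI)
          fix u assume u: "u \<in> T" "u \<in> ?N"
          have "u \<notin> CV - R"
          proof (cases "a \<in> K")
            case True then show ?thesis using u(1) unfolding T_def by simp
          next
            case False
            then have "u \<notin> K" using u(1) unfolding T_def
              using tree_closed[OF K _ rt_sym] by auto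
            then show ?thesis unfolding CV_def by blast
          qed
          then show "clq F' u = clq F u" using c2[OF u(2)] by simp
        qed
        have cT: "conn ?E T"
          unfolding T_def using connected_in_conn[OF hRc] comp_conn[of ?E a] by simp
        have abT: "a \<in> T \<and> b \<in> T"
        proof (cases "a \<in> K")
          case True
          have bK: "b \<in> K" using tree_closed[OF K True h(5)] .
          have "a \<notin> CV - R" "b \<notin> CV - R"
            using h(1,2) True c1[OF aN] c1[OF bN] unfolding \<open>w = v\<close> by auto
          then have "a \<in> R" "b \<in> R" using True bK wa unfolding CV_def \<open>w = v\<close> by auto
          then show ?thesis unfolding T_def using True by simp
        next
          case False
          then show ?thesis unfolding T_def using h(5) by simp
        qed
        obtain g where g: "g \<in> ?E" "g \<subseteq> T" "cross g X" "\<forall>u\<in>g. w \<in> clq F u"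
          using rip_conn[OF inv cT _ _ wa h(3) h(4)] abT by blast
        have "\<forall>u\<in>g. w \<in> clq F' u"
        proof
          fix u assume u: "u \<in> g"
          then have "u \<in> ?N" "u \<in> T" using EN g(1,2) by blast+
          then show "w \<in> clq F' u" using good g(4) u by simp
        qed
        then show ?thesis using g by blast
      qed
    qed
  qed
qed

lemma edge_cases2:
  assumes "e \<in> {e \<in> E. e \<inter> ST = {}} \<union> {{c, n} | i n. {i, n} \<in> E \<and> i \<in> ST \<and> n \<notin> ST}"
  obtains "e \<in> E" "e \<inter> ST = {}" | i n where "e = {c, n}" "{i, n} \<in> E" "i \<in> ST" "n \<notin> ST"
  using assms by blast

lemma pres_exact:
  assumes inv: "Inv D F" and op: "op_exact D F F'" and Dfin: "\<forall>v. finite (D v)"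
  shows "Inv D F'"
proof -
  let ?E = "edges F" and ?N = "nodes F"
  obtain K v c where K: "K \<in> trees F" and H:
     "connected_in ?E {i \<in> K. v \<in> clq F i} \<and> c \<notin> ?N
        \<and> nodes F' = (?N - {i \<in> K. v \<in> clq F i}) \<union> {c}
        \<and> edges F' = {e \<in> ?E. e \<inter> {i \<in> K. v \<in> clq F i} = {}}
                      \<union> {{c, n} | i n. {i, n} \<in> ?E \<and> i \<in> {i \<in> K. v \<in> clq F i} \<and> n \<notin> {i \<in> K. v \<in> clq F i}}
        \<and> (\<forall>i \<in> ?N - {i \<in> K. v \<in> clq F i}. clq F' i = clq F i \<and> bel F' i = bel F i)
        \<and> clq F' c = \<Union> (clq F ` {i \<in> K. v \<in> clq F i}) - {v}
        \<and> bel F' c = marg D (\<Union> (clq F ` {i \<in> K. v \<in> clq F i})) (\<Union> (clq F ` {i \<in> K. v \<in> clq F i}) - {v})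
              (\<lambda>x. (\<Prod>i \<in> {i \<in> K. v \<in> clq F i}. bel F i (restrict x (clq F i))) /
                  (\<Prod>e \<in> {e \<in> ?E. e \<subseteq> {i \<in> K. v \<in> clq F i}}. sbel F e (restrict x (sep F e))))
        \<and> (\<forall>e \<in> ?E. e \<inter> {i \<in> K. v \<in> clq F i} = {} \<longrightarrow> sep F' e = sep F e \<and> sbel F' e = sbel F e)
        \<and> (\<forall>i n. {i, n} \<in> ?E \<and> i \<in> {i \<in> K. v \<in> clq F i} \<and> n \<notin> {i \<in> K. v \<in> clq F i} \<longrightarrow>
              sep F' {c, n} = sep F {i, n} \<and> sbel F' {c, n} = sbel F {i, n})"
    using op unfolding op_exact_def Let_def by (elim bexE exE) (erule that)
  define ST where "ST = {i \<in> K. v \<in> clq F i}"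
  define U where "U = \<Union> (clq F ` ST)"
  have gPP: "(\<lambda>x. (\<Prod>i \<in> ST. bel F i (restrict x (clq F i))) /
                  (\<Prod>e \<in> {e \<in> ?E. e \<subseteq> ST}. sbel F e (restrict x (sep F e)))) = PP F ST"
    unfolding PP_def by (rule refl)
  note H' = H[folded ST_def, folded U_def, unfolded gPP]
  note hST = H'[THEN conjunct1]
  note hc0 = H'[THEN conjunct2, THEN conjunct1]
  note hN = H'[THEN conjunct2, THEN conjunct2, THEN conjunct1]
  note hE = H'[THEN conjunct2, THEN conjunct2, THEN conjunct2, THEN conjunct1]
  note hc = H'[THEN conjunct2, THEN conjunct2, THEN conjunct2, THEN conjunct2, THEN conjunct1]
  note hcc = H'[THEN conjunct2, THEN conjunct2, THEN conjunct2, THEN conjunct2, THEN conjunct2, THEN conjunct1]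
  note hbc = H'[THEN conjunct2, THEN conjunct2, THEN conjunct2, THEN conjunct2, THEN conjunct2, THEN conjunct2, THEN conjunct1]
  note hs = H'[THEN conjunct2, THEN conjunct2, THEN conjunct2, THEN conjunct2, THEN conjunct2, THEN conjunct2, THEN conjunct2, THEN conjunct1]
  note hn = H'[THEN conjunct2, THEN conjunct2, THEN conjunct2, THEN conjunct2, THEN conjunct2, THEN conjunct2, THEN conjunct2, THEN conjunct2]
  let ?N' = "(?N - ST) \<union> {c}"
  let ?E' = "{e \<in> ?E. e \<inter> ST = {}} \<union> {{c, n} | i n. {i, n} \<in> ?E \<and> i \<in> ST \<and> n \<notin> ST}"
  note I = InvD[OF inv]
  have card2: "\<forall>e\<in>?E. card e = 2" using I(2) by blast
  have EN: "\<forall>e\<in>?E. e \<subseteq> ?N" using I(2) by blast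
  have KN: "K \<subseteq> ?N"
  proof -
    obtain k where "k \<in> ?N" "K = {j. (k, j) \<in> (adj ?E)\<^sup>*}" using K unfolding trees_def by blast
    then show ?thesis using rt_nodes[of k _ ?E ?N] EN by blast
  qed
  have STK: "ST \<subseteq> K" unfolding ST_def by blast
  have STN: "ST \<subseteq> ?N" using STK KN by blast
  have finST: "finite ST" using STN I(1) by (rule finite_subset)
  have cST: "conn ?E ST" using connected_in_conn[OF hST] .
  have STne: "ST \<noteq> {}" using hST unfolding connected_in_def by blast
  have finU: "finite U" unfolding U_def using finST STN I(3) by blast
  have edgeK: "x \<in> K \<longleftrightarrow> y \<in> K" if "{x, y} \<in> ?E" for x y
    by (rule tree_closed_edge[OF K that])
  have jK: "(x, y) \<in> (adj ?E)\<^sup>*" if "x \<in> K" "y \<in> K" for x y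
  proof -
    obtain k where "K = {j. (k, j) \<in> (adj ?E)\<^sup>*}" using K unfolding trees_def by blast
    then have "(k, x) \<in> (adj ?E)\<^sup>*" "(k, y) \<in> (adj ?E)\<^sup>*" using that by simp_all
    then show ?thesis using rt_sym rtrancl_trans by metis
  qed
  have bd: "n \<in> K" "n \<in> ?N" "v \<notin> clq F n" "n \<noteq> c" "i \<in> ?N" "i \<noteq> c"
    if b: "{i, n} \<in> ?E" "i \<in> ST" "n \<notin> ST" for i n
  proof -
    show nK: "n \<in> K" using edgeK[OF b(1)] b(2) STK by blast
    show nN: "n \<in> ?N" using nK KN by blast
    show "v \<notin> clq F n" using nK b(3) unfolding ST_def by blast
    show "n \<noteq> c" using nN hc0 by blast
    show iN: "i \<in> ?N" using b(2) STN by blast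
    show "i \<noteq> c" using iN hc0 by blast
  qed
  have STside: "ST \<subseteq> Y \<or> ST \<inter> Y = {}" if "\<forall>f\<in>?E. f \<subseteq> ST \<longrightarrow> \<not> cross f Y" for Y
  proof (rule ccontr)
    assume "\<not> (ST \<subseteq> Y \<or> ST \<inter> Y = {})"
    then have "Y \<inter> ST \<noteq> {}" "ST - Y \<noteq> {}" by blast+
    then obtain f where "f \<in> ?E" "f \<subseteq> ST" "cross f Y" using cST unfolding conn_def by blast
    then show False using that by blast
  qed
  have bdY: "\<exists>Y. i \<in> Y \<and> n \<notin> Y \<and> ST \<subseteq> Y \<and> (\<forall>g\<in>?E. cross g Y \<longrightarrow> g = {i, n})"
    if b: "{i, n} \<in> ?E" "i \<in> ST" "n \<notin> ST" for i n
  proof -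
    obtain Y where Y: "i \<in> Y" "n \<notin> Y" "\<forall>g\<in>?E. cross g Y \<longrightarrow> g = {i, n}"
      using br_orient[OF inv b(1)] by blast
    have "\<forall>f\<in>?E. f \<subseteq> ST \<longrightarrow> \<not> cross f Y" using Y(3) b(3) by blast
    then have "ST \<subseteq> Y \<or> ST \<inter> Y = {}" by (rule STside)
    then have "ST \<subseteq> Y" using Y(1) b(2) by blast
    then show ?thesis using Y by blast
  qed
  have sepc: "(U - {v}) \<inter> clq F n = clq F i \<inter> clq F n"
    if b: "{i, n} \<in> ?E" "i \<in> ST" "n \<notin> ST" for i n
  proof
    show "clq F i \<inter> clq F n \<subseteq> (U - {v}) \<inter> clq F n"
      using bd(3)[OF b] b(2) unfolding U_def by blast
    show "(U - {v}) \<inter> clq F n \<subseteq> clq F i \<inter> clq F n"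
    proof
      fix w assume w: "w \<in> (U - {v}) \<inter> clq F n"
      then obtain j where j: "j \<in> ST" "w \<in> clq F j" unfolding U_def by blast
      obtain Y where Y: "i \<in> Y" "n \<notin> Y" "ST \<subseteq> Y" "\<forall>g\<in>?E. cross g Y \<longrightarrow> g = {i, n}"
        using bdY[OF b] by blast
      have "j \<in> Y" using Y(3) j(1) by blast
      have jn: "(j, n) \<in> (adj ?E)\<^sup>*" using jK j(1) STK bd(1)[OF b] by blast
      obtain g where g: "g \<in> ?E" "cross g Y" "\<forall>u\<in>g. w \<in> clq F u"
        using I(9)[rule_format, OF j(2) _ \<open>j \<in> Y\<close> Y(2) jn] w by blast
      then have "g = {i, n}" using Y(4) by blast
      then show "w \<in> clq F i \<inter> clq F n" using g(3) by blast
    qed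
  qed
  interpret m: mctx D F ST
  proof
    show "\<forall>v. finite (D v)" by (rule Dfin)
    show "\<forall>e\<in>?E. card e = 2" by (rule card2)
    show "\<forall>e\<in>?E. e \<subseteq> ST \<longrightarrow> (\<exists>X. cross e X \<and> (\<forall>f\<in>?E. cross f X \<longrightarrow> f = e))" using I(8) by blast
    show "\<forall>w X a b. a \<in> ST \<longrightarrow> b \<in> ST \<longrightarrow> w \<in> clq F a \<longrightarrow> w \<in> clq F b \<longrightarrow> a \<in> X \<longrightarrow> b \<notin> X
                \<longrightarrow> (\<exists>f\<in>?E. cross f X \<and> (\<forall>u\<in>f. w \<in> clq F u))"
    proof (intro allI impI)
      fix w X a b assume h: "a \<in> ST" "b \<in> ST" "w \<in> clq F a" "w \<in> clq F b" "a \<in> X" "b \<notin> X"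
      have "(a, b) \<in> (adj ?E)\<^sup>*" using jK h(1,2) STK by blast
      then show "\<exists>f\<in>?E. cross f X \<and> (\<forall>u\<in>f. w \<in> clq F u)"
        using I(9)[rule_format, OF h(3) h(4) h(5) h(6)] by blast
    qed
    show "\<forall>i\<in>ST. finite (clq F i)" using I(3) STN by blast
    show "\<forall>i\<in>ST. \<forall>a\<in>PiE (clq F i) D. bel F i a \<ge> 0" using I(4) STN by blast
    show "\<forall>e\<in>?E. e \<subseteq> ST \<longrightarrow> (\<forall>a\<in>PiE (sep F e) D. sbel F e a \<ge> 0)" using I(5) by blast
    show "\<forall>x y. {x, y} \<in> ?E \<longrightarrow> {x, y} \<subseteq> ST \<longrightarrow> sep F {x, y} = clq F x \<inter> clq F y"
      using I(6) by blast
    show "\<forall>x y. {x, y} \<in> ?E \<longrightarrow> {x, y} \<subseteq> ST \<longrightarrow>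
                (\<forall>a\<in>PiE (sep F {x, y}) D. marg D (clq F x) (sep F {x, y}) (bel F x) a = sbel F {x, y} a)"
      using I(7) by blast
  qed
  have Mi: "marg D U (clq F i) (PP F ST) b = bel F i b" if "i \<in> ST" "b \<in> PiE (clq F i) D" for i b
    unfolding U_def by (rule m.M[OF subset_refl finST cST that])
  have E'N: "card e = 2 \<and> e \<subseteq> ?N'" if e: "e \<in> ?E'" for e
    using e
  proof (cases rule: edge_cases2)
    case 1
    then have "card e = 2 \<and> e \<subseteq> ?N" using I(2) by blast
    then show ?thesis using 1(2) by blast
  next
    case (2 i n)
    then show ?thesis using bd[OF 2(2,3,4)] by simp
  qed
  have newE: "{c, n} \<in> ?E'" if "{i, n} \<in> ?E" "i \<in> ST" "n \<notin> ST" for i n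
  proof -
    have "{c, n} \<in> {{c, n} | i n. {i, n} \<in> ?E \<and> i \<in> ST \<and> n \<notin> ST}" using that by blast
    then show ?thesis by (rule UnI2)
  qed
  have oldc: "clq F' i = clq F i" "bel F' i = bel F i" if "i \<in> ?N - ST" for i
    using hc that by simp_all
  have hn2: "sep F' {c, n} = sep F {i, n} \<and> sbel F' {c, n} = sbel F {i, n}"
    if "{i, n} \<in> ?E" "i \<in> ST" "n \<notin> ST" for i n
    by (rule hn[rule_format, OF conjI[OF that(1) conjI[OF that(2) that(3)]]])
  have hs2: "sep F' e = sep F e \<and> sbel F' e = sbel F e" if "e \<in> ?E" "e \<inter> ST = {}" for e
    by (rule hs[rule_format, OF that])
  have oldN: "e \<subseteq> ?N - ST" if "e \<in> ?E" "e \<inter> ST = {}" for e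
    using that EN by blast
  show ?thesis unfolding Inv_def hN hE
  proof (intro conjI)
    show "finite ?N'" using I(1) by simp
    show "\<forall>e\<in>?E'. card e = 2 \<and> e \<subseteq> ?N'" using E'N by blast
    show "\<forall>i\<in>?N'. finite (clq F' i)"
    proof
      fix i assume i: "i \<in> ?N'"
      show "finite (clq F' i)"
      proof (cases "i = c")
        case True then show ?thesis using hcc finU by simp
      next
        case False then show ?thesis using i oldc I(3) by simp
      qed
    qed
    show "\<forall>i\<in>?N'. \<forall>a\<in>PiE (clq F' i) D. bel F' i a \<ge> 0"
    proof (intro ballI)
      fix i a assume i: "i \<in> ?N'" and a: "a \<in> PiE (clq F' i) D"
      show "bel F' i a \<ge> 0"
      proof (cases "i = c")
        case True
        have a': "a \<in> PiE (U - {v}) D" using a True hcc by simp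
        have "marg D U (U - {v}) (PP F ST) a \<ge> 0"
          by (rule marg_nonneg[OF a']) (use m.PP_nonneg[OF subset_refl] U_def in auto)
        then show ?thesis using True hbc by simp
      next
        case False
        then have "i \<in> ?N - ST" using i by blast
        then show ?thesis using oldc a I(4) by simp
      qed
    qed
    show "\<forall>e\<in>?E'. \<forall>a\<in>PiE (sep F' e) D. sbel F' e a \<ge> 0"
    proof (intro ballI)
      fix e a assume e: "e \<in> ?E'" and a: "a \<in> PiE (sep F' e) D"
      show "sbel F' e a \<ge> 0" using e
      proof (cases rule: edge_cases2)
        case 1 then show ?thesis using hs2[OF 1(1,2)] a I(5) by simp
      next
        case (2 i n)
        then show ?thesis using hn2[OF 2(2,3,4)] a I(5) by simp
      qed
    qed
    show "\<forall>x y. {x, y} \<in> ?E' \<longrightarrow> sep F' {x, y} = clq F' x \<inter> clq F' y"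
    proof (intro allI impI)
      fix x y assume xy: "{x, y} \<in> ?E'"
      show "sep F' {x, y} = clq F' x \<inter> clq F' y" using xy
      proof (cases rule: edge_cases2)
        case 1
        have "x \<in> ?N - ST" "y \<in> ?N - ST" using oldN[OF 1(1,2)] by simp_all
        then show ?thesis using hs2[OF 1(1,2)] oldc Inv_val'[OF inv 1(1)] by simp
      next
        case (2 i n)
        have s: "sep F' {x, y} = clq F i \<inter> clq F n"
          using hn2[OF 2(2,3,4)] 2(1) Inv_val'[OF inv 2(2)] by simp
        have nN: "n \<in> ?N - ST" using bd[OF 2(2,3,4)] 2(4) by blast
        have "(x = c \<and> y = n) \<or> (x = n \<and> y = c)" using 2(1) by (simp add: doubleton_eq_iff)
        then show ?thesis
        proof
          assume "x = c \<and> y = n"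
          then show ?thesis using s hcc oldc[OF nN] sepc[OF 2(2,3,4)] by simp
        next
          assume "x = n \<and> y = c"
          then show ?thesis using s hcc oldc[OF nN] sepc[OF 2(2,3,4)] by (simp add: Int_commute)
        qed
      qed
    qed
    show "\<forall>x y. {x, y} \<in> ?E' \<longrightarrow>
          (\<forall>a\<in>PiE (sep F' {x, y}) D. marg D (clq F' x) (sep F' {x, y}) (bel F' x) a = sbel F' {x, y} a)"
    proof (intro allI impI ballI)
      fix x y a assume xy: "{x, y} \<in> ?E'" and a: "a \<in> PiE (sep F' {x, y}) D"
      show "marg D (clq F' x) (sep F' {x, y}) (bel F' x) a = sbel F' {x, y} a" using xy
      proof (cases rule: edge_cases2)
        case 1
        have xN: "x \<in> ?N - ST" using oldN[OF 1(1,2)] by simp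
        then show ?thesis using hs2[OF 1(1,2)] oldc[OF xN] Inv_cal'[OF inv 1(1)] a by simp
      next
        case (2 i n)
        have S: "sep F' {x, y} = sep F {i, n}" "sbel F' {x, y} = sbel F {i, n}"
          using hn2[OF 2(2,3,4)] 2(1) by simp_all
        have a': "a \<in> PiE (sep F {i, n}) D" using a S by simp
        have nN: "n \<in> ?N - ST" using bd[OF 2(2,3,4)] 2(4) by blast
        have val: "sep F {i, n} = clq F i \<inter> clq F n" by (rule Inv_val'[OF inv 2(2)])
        have "x = c \<or> x = n" using 2(1) by (auto simp: doubleton_eq_iff)
        then show ?thesis
        proof
          assume xn: "x = n"
          have e2: "{n, i} \<in> ?E" using 2(2) by (simp add: insert_commute)
          have "marg D (clq F n) (sep F {n, i}) (bel F n) a = sbel F {n, i} a"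
            using Inv_cal'[OF inv e2] a' by (simp add: insert_commute)
          then show ?thesis using xn S oldc[OF nN] by (simp add: insert_commute)
        next
          assume xc: "x = c"
          have iU: "clq F i \<subseteq> U" using 2(3) unfolding U_def by blast
          have sub1: "sep F {i, n} \<subseteq> U - {v}" "U - {v} \<subseteq> U"
            using val bd(3)[OF 2(2,3,4)] iU by blast+
          have sub2: "sep F {i, n} \<subseteq> clq F i" using val by blast
          have "marg D (U - {v}) (sep F {i, n}) (marg D U (U - {v}) (PP F ST)) a
                = marg D U (sep F {i, n}) (PP F ST) a" by (rule marg_comp[OF sub1])
          also have "\<dots> = marg D (clq F i) (sep F {i, n}) (marg D U (clq F i) (PP F ST)) a"
            by (simp only: marg_comp[OF sub2 iU])
          also have "\<dots> = marg D (clq F i) (sep F {i, n}) (bel F i) a"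
            by (rule marg_cong[OF a' sub2]) (rule Mi[OF 2(3)])
          also have "\<dots> = sbel F {i, n} a" by (rule Inv_cal'[OF inv 2(2) a'])
          finally show ?thesis using xc S hcc hbc by simp
        qed
      qed
    qed
    show "\<forall>e\<in>?E'. \<exists>X. cross e X \<and> (\<forall>f\<in>?E'. cross f X \<longrightarrow> f = e)"
    proof
      fix e assume e: "e \<in> ?E'"
      then show "\<exists>X. cross e X \<and> (\<forall>f\<in>?E'. cross f X \<longrightarrow> f = e)"
      proof (cases rule: edge_cases2)
        case 1
        note e1 = 1
        obtain X where X: "cross e X" "\<forall>g\<in>?E. cross g X \<longrightarrow> g = e" using I(8) e1(1) by blast
        have "\<forall>f\<in>?E. f \<subseteq> ST \<longrightarrow> \<not> cross f X"
        proof (intro ballI impI notI)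
          fix f assume f: "f \<in> ?E" "f \<subseteq> ST" "cross f X"
          then have "f = e" using X(2) by blast
          moreover have "f \<noteq> {}" using f(3) unfolding cross_def by blast
          ultimately show False using f(2) e1(2) by blast
        qed
        then have side: "ST \<subseteq> X \<or> ST \<inter> X = {}" by (rule STside)
        define X' where "X' = (X - ST - {c}) \<union> (if ST \<subseteq> X then {c} else {})"
        have ceN: "c \<notin> e" using oldN[OF e1] hc0 by blast
        have agree: "f \<inter> X' = f \<inter> X" if "f \<subseteq> ?N - ST" for f
          using that hc0 unfolding X'_def by auto
        have "cross e X'" using X(1) agree[OF oldN[OF e1]] unfolding cross_def by auto
        moreover have "\<forall>f\<in>?E'. cross f X' \<longrightarrow> f = e"
        proof (intro ballI impI)
          fix f assume f: "f \<in> ?E'" "cross f X'"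
          show "f = e" using f(1)
          proof (cases rule: edge_cases2)
            case 1
            then have "cross f X" using f(2) agree[OF oldN[OF 1]] unfolding cross_def by auto
            then show ?thesis using X(2) 1(1) by blast
          next
            case (2 j m)
            have mc: "m \<noteq> c" "m \<notin> ST" using bd[OF 2(2,3,4)] 2(4) by simp_all
            have cX': "c \<in> X' \<longleftrightarrow> j \<in> X" using side 2(3) unfolding X'_def by auto
            have mX': "m \<in> X' \<longleftrightarrow> m \<in> X" using mc unfolding X'_def by auto
            have "cross {c, m} X'" using f(2) 2(1) by simp
            then have "cross {j, m} X" using cX' mX' unfolding cross_two by blast
            then have "{j, m} = e" using X(2) 2(2) by blast
            then show ?thesis using 2(3) e1(2) by blast
          qed
        qed
        ultimately show ?thesis by blast
      next
        case (2 i n)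
        note e2 = 2
        obtain Y where Y: "i \<in> Y" "n \<notin> Y" "ST \<subseteq> Y" "\<forall>g\<in>?E. cross g Y \<longrightarrow> g = {i, n}"
          using bdY[OF e2(2,3,4)] by blast
        define Y' where "Y' = (Y - ST) \<union> {c}"
        have nc: "n \<noteq> c" using bd[OF e2(2,3,4)] by simp
        have "cross e Y'" using e2(1) nc Y(2) unfolding Y'_def cross_def by auto
        moreover have "\<forall>f\<in>?E'. cross f Y' \<longrightarrow> f = e"
        proof (intro ballI impI)
          fix f assume f: "f \<in> ?E'" "cross f Y'"
          show "f = e" using f(1)
          proof (cases rule: edge_cases2)
            case 1
            have "f \<inter> Y' = f \<inter> Y" using oldN[OF 1] hc0 unfolding Y'_def by auto
            then have "cross f Y" using f(2) unfolding cross_def by auto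
            then have "f = {i, n}" using Y(4) 1(1) by blast
            then show ?thesis using 1(2) e2(3) by blast
          next
            case (2 j m)
            have mc: "m \<noteq> c" "m \<notin> ST" using bd[OF 2(2,3,4)] 2(4) by simp_all
            have "cross {c, m} Y'" using f(2) 2(1) by simp
            then have "m \<notin> Y" using mc unfolding cross_two Y'_def by auto
            then have "cross {j, m} Y" using Y(3) 2(3) unfolding cross_two by blast
            then have "{j, m} = {i, n}" using Y(4) 2(2) by blast
            then have "m = n" using 2(3) e2(4) by (auto simp: doubleton_eq_iff)
            then show ?thesis using 2(1) e2(1) by simp
          qed
        qed
        ultimately show ?thesis by blast
      qed
    qed
    show "\<forall>w X a b. w \<in> clq F' a \<longrightarrow> w \<in> clq F' b \<longrightarrow> a \<in> X \<longrightarrow> b \<notin> X \<longrightarrow>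
          (a, b) \<in> (adj ?E')\<^sup>* \<longrightarrow> (\<exists>f\<in>?E'. cross f X \<and> (\<forall>u\<in>f. w \<in> clq F' u))"
    proof (intro allI impI)
      fix w X a b assume h: "w \<in> clq F' a" "w \<in> clq F' b" "a \<in> X" "b \<notin> X" "(a, b) \<in> (adj ?E')\<^sup>*"
      have E'N2: "\<forall>e\<in>?E'. e \<subseteq> ?N'"
      proof
        fix e assume "e \<in> ?E'"
        then show "e \<subseteq> ?N'" using E'N by blast
      qed
      have "a \<noteq> b" using h(3,4) by blast
      then have aN: "a \<in> ?N'" using rt_start[OF h(5) _ E'N2] by blast
      have bN: "b \<in> ?N'" using h(5) E'N2 aN by (rule rt_nodes)
      have "\<exists>j. j \<in> ST \<and> (w \<in> U \<longrightarrow> w \<in> clq F j)"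
      proof (cases "w \<in> U")
        case True then show ?thesis unfolding U_def by blast
      next
        case False then show ?thesis using STne by blast
      qed
      then obtain j0 where j0: "j0 \<in> ST" "w \<in> U \<Longrightarrow> w \<in> clq F j0" by blast
      define hh where "hh x = (if x = c then j0 else x)" for x
      have "(hh a, hh b) \<in> (adj ?E)\<^sup>*"
      proof (rule rt_map[OF h(5)])
        fix x y assume xy: "{x, y} \<in> ?E'"
        show "(hh x, hh y) \<in> (adj ?E)\<^sup>*" using xy
        proof (cases rule: edge_cases2)
          case 1
          have "x \<noteq> c" "y \<noteq> c" using oldN[OF 1] hc0 by blast+
          then show ?thesis using adj_edge[OF 1(1)] unfolding hh_def by simp
        next
          case (2 i n)
          have nc: "n \<noteq> c" using bd[OF 2(2,3,4)] by simp
          have "(j0, i) \<in> (adj ?E)\<^sup>*" using jK j0(1) 2(3) STK by blast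
          then have jn: "(j0, n) \<in> (adj ?E)\<^sup>*" using adj_edge[OF 2(2)] by (rule rtrancl_trans)
          have nj: "(n, j0) \<in> (adj ?E)\<^sup>*" using rt_sym[OF jn] .
          have "(x = c \<and> y = n) \<or> (x = n \<and> y = c)" using 2(1) by (simp add: doubleton_eq_iff)
          then show ?thesis using jn nj nc unfolding hh_def by (elim disjE conjE) simp_all
        qed
      qed
      define X0 where "X0 = (X - ST - {c}) \<union> (if c \<in> X then ST else {})"
      have a0: "hh a \<in> X0" "w \<in> clq F (hh a)"
      proof -
        show "hh a \<in> X0" using h(3) aN j0(1) unfolding hh_def X0_def by auto
        show "w \<in> clq F (hh a)"
        proof (cases "a = c")
          case True
          then have "w \<in> U" using h(1) hcc by simp
          then show ?thesis using j0(2) True unfolding hh_def by simp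
        next
          case False
          then have "a \<in> ?N - ST" using aN by blast
          then show ?thesis using h(1) oldc False unfolding hh_def by simp
        qed
      qed
      have b0: "hh b \<notin> X0" "w \<in> clq F (hh b)"
      proof -
        show "hh b \<notin> X0" using h(4) bN j0(1) unfolding hh_def X0_def by auto
        show "w \<in> clq F (hh b)"
        proof (cases "b = c")
          case True
          then have "w \<in> U" using h(2) hcc by simp
          then show ?thesis using j0(2) True unfolding hh_def by simp
        next
          case False
          then have "b \<in> ?N - ST" using bN by blast
          then show ?thesis using h(2) oldc False unfolding hh_def by simp
        qed
      qed
      obtain g where g: "g \<in> ?E" "cross g X0" "\<forall>u\<in>g. w \<in> clq F u"
        using I(9)[rule_format, OF a0(2) b0(2) a0(1) b0(1) \<open>(hh a, hh b) \<in> (adj ?E)\<^sup>*\<close>] by blast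
      show "\<exists>f\<in>?E'. cross f X \<and> (\<forall>u\<in>f. w \<in> clq F' u)"
      proof (cases "g \<inter> ST = {}")
        case True
        have gN: "g \<subseteq> ?N - ST" using oldN[OF g(1) True] .
        have gE': "g \<in> ?E'" using g(1) True by (intro UnI1) simp
        have "g \<inter> X0 = g \<inter> X" using gN hc0 unfolding X0_def by auto
        then have "cross g X" using g(2) unfolding cross_def by auto
        moreover have "\<forall>u\<in>g. w \<in> clq F' u"
        proof
          fix u assume u: "u \<in> g"
          then have "clq F' u = clq F u" using gN oldc by blast
          then show "w \<in> clq F' u" using g(3) u by simp
        qed
        ultimately show ?thesis using gE' by blast
      next
        case False
        then obtain j where j: "j \<in> g" "j \<in> ST" by blast
        have "card g = 2" using card2 g(1) by blast
        then obtain p q where pq: "g = {p, q}" "p \<noteq> q" by (rule card2_obtain)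
        obtain m where m: "g = {j, m}"
        proof (cases "j = p")
          case True then show thesis using that[of q] pq by simp
        next
          case False then have "j = q" using j(1) pq by blast
          then show thesis using that[of p] pq by (simp add: insert_commute)
        qed
        have ST0: "ST \<subseteq> X0 \<or> ST \<inter> X0 = {}" unfolding X0_def by auto
        have mST: "m \<notin> ST"
        proof
          assume "m \<in> ST"
          then have "g \<subseteq> ST" using m j(2) by blast
          then show False using g(2) ST0 unfolding cross_def by blast
        qed
        have gE: "{j, m} \<in> ?E" using g(1) m by simp
        have new: "{c, m} \<in> ?E'" by (rule newE[OF gE j(2) mST])
        have mb: "m \<in> K" "v \<notin> clq F m" "m \<noteq> c" "m \<in> ?N" using bd[OF gE j(2) mST] by simp_all
        have wm: "w \<in> clq F m" "w \<in> clq F j" using g(3) m by simp_all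
        have "w \<noteq> v" using wm(1) mb(2) by blast
        then have wc: "w \<in> clq F' c" using hcc wm(2) j(2) unfolding U_def by blast
        have "clq F' m = clq F m" using oldc mb(4) mST by blast
        then have wm': "w \<in> clq F' m" using wm(1) by simp
        have cX: "c \<in> X \<longleftrightarrow> j \<in> X0" using j(2) unfolding X0_def by auto
        have mX: "m \<in> X \<longleftrightarrow> m \<in> X0" using mb(3) mST unfolding X0_def by auto
        have "cross {j, m} X0" using g(2) m by simp
        then have "cross {c, m} X" using cX mX unfolding cross_two by blast
        moreover have "\<forall>u\<in>{c, m}. w \<in> clq F' u" using wc wm' by blast
        ultimately show ?thesis using new by blast
      qed
    qed
  qed
qed

lemma steps_Inv:
  assumes "(ctf_step D)\<^sup>*\<^sup>* F F'" "Inv D F" "\<forall>v. finite (D v)"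
  shows "Inv D F'"
  using assms(1,2)
proof (induction rule: rtranclp_induct)
  case base then show ?case by simp
next
  case (step y z)
  have iy: "Inv D y" using step.IH step.prems by simp
  show ?case using step.hyps(2) unfolding ctf_step_def
  proof (elim disjE)
    assume "op_restrict y z" then show ?thesis using pres_restrict[OF iy] by blast
  next
    assume "op_exact D y z" then show ?thesis using pres_exact[OF iy _ assms(3)] by blast
  next
    assume "op_local D y z" then show ?thesis using pres_local[OF iy] by blast
  next
    assume "op_remove y z" then show ?thesis using pres_remove[OF iy] by blast
  qed
qed

theorem proposition2:
  fixes D :: "'v \<Rightarrow> 's set" and F F' :: "('n, 'v, 's) ctf"
  assumes "\<forall>v. finite (D v)"
    and "ctf_wf D F"
    and "\<forall>K \<in> trees F. valid_tree F K \<and> calibrated D F K"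
    and "(ctf_step D)\<^sup>*\<^sup>* F F'"
  shows "\<forall>K \<in> trees F'. calibrated D F' K"
proof -
  have "Inv D F" by (rule init_Inv[OF assms(2) assms(3)])
  then have "Inv D F'" using steps_Inv[OF assms(4) _ assms(1)] by blast
  then show ?thesis by (rule Inv_cal)
qed

end
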